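(* Let $d\in\mathbb N$, $\beta\in(1,\infty)$, and let the kernels $K_r,G^0_r,G^1_r,G^v_r$ be as defined in the context. There exists $C>0$ (independent of $r$) such that for every $r>0$, $$\operatorname{supp}K_r\cup\operatorname{supp}G^0_r\cup\operatorname{supp}G^1_r\cup\operatorname{supp}G^v_r\subset\{(s,y,w)\in\mathbb R^{1+2d}: -2r\le s\le -r,\ |y|\le Cr^\beta,\ |w|\le Cr^{\beta-1}\},$$ and, with implicit constants independent of $r>0$, $$|K_r|\lesssim r^{-\mathsf Q},\ |\nabla_yK_r|\lesssim r^{-\beta-\mathsf Q},\quad |G^0_r|\lesssim r^{1-\beta-\mathsf Q},\ |\nabla_yG^0_r|\lesssim r^{1-2\beta-\mathsf Q},$$ $$|G^1_r|\lesssim r^{-\mathsf Q},\ |\nabla_yG^1_r|\lesssim r^{-\beta-\mathsf Q},\quad |G^v_r|\lesssim r^{\beta-2-\mathsf Q},\ |\nabla_yG^v_r|\lesssim r^{-2-\mathsf Q},$$ where $\nabla_y$ denotes differentiation in the variable $y$.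
   Context: All $2\times2$ matrices act on $\mathbb R^{2d}=\mathbb R^d\times\mathbb R^d$ as their tensor product with $\mathrm{Id}_d$. Let $g_1(r)=r^\beta\sin\log r$, $g_2(r)=r^\beta\cos\log r$ for $r>0$, and $$\mathcal W(r)=\begin{pmatrix}g_1(r)&g_2(r)\\ \dot g_1(r)&\dot g_2(r)\end{pmatrix},\quad \mathcal D_\delta=\begin{pmatrix}\mathrm{Id}_d&0\\0&\delta\,\mathrm{Id}_d\end{pmatrix},\quad \mathcal A_{m_0}(r)=\mathcal D_{m_0}^{-1}\mathcal W(r)\ (m_0\neq0),$$ $$\mathcal F_{m_0}(r)=\bigl(m_0^{-1}\ddot g_1(r)\ \ m_0^{-1}\ddot g_2(r)\bigr)\in\mathbb R^{d\times2d}.$$ Let $c_0:=(-1)^d$ (so that $\det\mathcal W(r)=c_0r^{(2\beta-1)d}$) and $\mathsf Q:=(2\beta-1)d+1$. Fix a nonnegative $\psi\in C_c^\infty(\mathbb R^{1+2d})$ with unit mass and $\operatorname{supp}\psi\subset(-2,-1)\times B_1(0)\times B_1(0)$; write $\nabla_{x,v}\psi$ for its gradient in the last $2d$ variables. For $r>0$ and $(s,y,w)\in\mathbb R^{1+2d}$ (all kernels set to $0$ when $s=0$), with $M:=\mathcal A_{s/r}(r)^{-1}$ and $M_{\cdot;2}$ its second block column ($2d\times d$): $$K_r(s,y,w)=c_0^{-1}r^{-\mathsf Q}(s/r)^d\,\psi\bigl(s/r,M(y,w)\bigr),$$ $$G^0_r(s,y,w)=c_0^{-1}(s/r)^{d+1}r^{-\mathsf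 Q}\,[\nabla_{x,v}\psi]^T\bigl(s/r,M(y,w)\bigr)\,M_{\cdot;2},$$ $$G^1_r(s,y,w)=-c_0^{-1}(s/r)^{d+1}r^{-\mathsf Q}\,\psi\bigl(s/r,M(y,w)\bigr),$$ $$G^v_r(s,y,w)=-c_0^{-1}(s/r)^{d}r^{-\mathsf Q}\,\psi\bigl(s/r,M(y,w)\bigr)\,\mathcal F_{s/r}(r)\,M(y,w).$$ *)

theory Defs
  imports "HOL-Analysis.Analysis"
begin

inductive iter_dderiv :: "('a::real_normed_vector \<Rightarrow> 'b::real_normed_vector) \<Rightarrow> ('a \<Rightarrow> 'b) \<Rightarrow> bool"
  for f where
  base: "iter_dderiv f f"
| step: "iter_dderiv f g \<Longrightarrow> iter_dderiv f (\<lambda>x. frechet_derivative g (at x) v)"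

text \<open>A function is smooth if all iterated directional derivatives exist everywhere
  (as Frechet derivatives) and are continuous; on finite-dimensional spaces this is C-infinity.\<close>
definition smooth_fun :: "('a::real_normed_vector \<Rightarrow> 'b::real_normed_vector) \<Rightarrow> bool" where
  "smooth_fun f \<longleftrightarrow> (\<forall>g. iter_dderiv f g \<longrightarrow> (\<forall>x. g differentiable (at x)) \<and> continuous_on UNIV g)"

definition g1 :: "real \<Rightarrow> real \<Rightarrow> real" where "g1 \<beta> r = r powr \<beta> * sin (ln r)"
definition g2 :: "real \<Rightarrow> real \<Rightarrow> real" where "g2 \<beta> r = r powr \<beta> * cos (ln r)"

text \<open>2x2 scalar matrices; they act on R^d x R^d via tensor product with Id_d.\<close>
definition mat2 :: "real \<Rightarrow> real \<Rightarrow> real \<Rightarrow> real \<Rightarrow> real^2^2" where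
  "mat2 a b c e = (\<chi> i j. if i = 1 then (if j = 1 then a else b) else (if j = 1 then c else e))"

definition blk_act :: "real^2^2 \<Rightarrow> ((real^'d) \<times> (real^'d)) \<Rightarrow> ((real^'d) \<times> (real^'d))" where
  "blk_act P z = ((P$1$1) *\<^sub>R fst z + (P$1$2) *\<^sub>R snd z, (P$2$1) *\<^sub>R fst z + (P$2$2) *\<^sub>R snd z)"

definition Wmat :: "real \<Rightarrow> real \<Rightarrow> real^2^2" where
  "Wmat \<beta> r = mat2 (g1 \<beta> r) (g2 \<beta> r) (deriv (g1 \<beta>) r) (deriv (g2 \<beta>) r)"

definition Dmat :: "real \<Rightarrow> real^2^2" where
  "Dmat \<delta> = mat2 1 0 0 \<delta>"

definition Amat :: "real \<Rightarrow> real \<Rightarrow> real \<Rightarrow> real^2^2" where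
  "Amat \<beta> m0 r = matrix_inv (Dmat m0) ** Wmat \<beta> r"

definition Fop :: "real \<Rightarrow> real \<Rightarrow> real \<Rightarrow> ((real^'d) \<times> (real^'d)) \<Rightarrow> real^'d" where
  "Fop \<beta> m0 r z = (inverse m0 * deriv (deriv (g1 \<beta>)) r) *\<^sub>R fst z
                 + (inverse m0 * deriv (deriv (g2 \<beta>)) r) *\<^sub>R snd z"

definition c0 :: "'d::finite itself \<Rightarrow> real" where "c0 _ = (-1) ^ CARD('d)"

definition Qexp :: "'d::finite itself \<Rightarrow> real \<Rightarrow> real" where
  "Qexp _ \<beta> = (2*\<beta> - 1) * real CARD('d) + 1"

definition Mop :: "real \<Rightarrow> real \<Rightarrow> real \<Rightarrow> ((real^'d) \<times> (real^'d)) \<Rightarrow> ((real^'d) \<times> (real^'d))" where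
  "Mop \<beta> r s = blk_act (matrix_inv (Amat \<beta> (s/r) r))"

definition Kker :: "real \<Rightarrow> (real \<times> ((real^'d) \<times> (real^'d)) \<Rightarrow> real) \<Rightarrow> real \<Rightarrow> real \<Rightarrow> real^'d \<Rightarrow> real^'d \<Rightarrow> real" where
  "Kker \<beta> \<psi> r s y w = (if s = 0 then 0 else
     inverse (c0 TYPE('d)) * r powr (- Qexp TYPE('d) \<beta>) * (s/r) ^ CARD('d)
       * \<psi> (s/r, Mop \<beta> r s (y, w)))"

text \<open>[grad_{x,v} psi]^T(s/r, M(y,w)) M_{.;2}: the j-th entry is the derivative of psi in the
  (x,v)-variables at M(y,w) applied to the j-th column of the second block column of M,
  i.e. to M(0, e_j).\<close>
definition G0ker :: "real \<Rightarrow> (real \<times> ((real^'d) \<times> (real^'d)) \<Rightarrow> real) \<Rightarrow> real \<Rightarrow> real \<Rightarrow> real^'d \<Rightarrow> real^'d \<Rightarrow> real^'d" where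
  "G0ker \<beta> \<psi> r s y w = (if s = 0 then 0 else
     (inverse (c0 TYPE('d)) * (s/r) ^ (CARD('d) + 1) * r powr (- Qexp TYPE('d) \<beta>)) *\<^sub>R
       (\<chi> j. frechet_derivative (\<lambda>q. \<psi> (s/r, q)) (at (Mop \<beta> r s (y, w)))
               (Mop \<beta> r s (0, axis j 1))))"

definition G1ker :: "real \<Rightarrow> (real \<times> ((real^'d) \<times> (real^'d)) \<Rightarrow> real) \<Rightarrow> real \<Rightarrow> real \<Rightarrow> real^'d \<Rightarrow> real^'d \<Rightarrow> real" where
  "G1ker \<beta> \<psi> r s y w = (if s = 0 then 0 else
     - inverse (c0 TYPE('d)) * (s/r) ^ (CARD('d) + 1) * r powr (- Qexp TYPE('d) \<beta>)
       * \<psi> (s/r, Mop \<beta> r s (y, w)))"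

definition Gvker :: "real \<Rightarrow> (real \<times> ((real^'d) \<times> (real^'d)) \<Rightarrow> real) \<Rightarrow> real \<Rightarrow> real \<Rightarrow> real^'d \<Rightarrow> real^'d \<Rightarrow> real^'d" where
  "Gvker \<beta> \<psi> r s y w = (if s = 0 then 0 else
     (- inverse (c0 TYPE('d)) * (s/r) ^ CARD('d) * r powr (- Qexp TYPE('d) \<beta>)
       * \<psi> (s/r, Mop \<beta> r s (y, w))) *\<^sub>R Fop \<beta> (s/r) r (Mop \<beta> r s (y, w)))"

definition ksupp :: "(real \<Rightarrow> real^'d \<Rightarrow> real^'d \<Rightarrow> 'b::zero) \<Rightarrow> (real \<times> (real^'d) \<times> (real^'d)) set" where
  "ksupp k = closure {(s, y, w). k s y w \<noteq> 0}"

definition grad_y_bound :: "(real \<Rightarrow> real^'d \<Rightarrow> real^'d \<Rightarrow> 'b::real_normed_vector) \<Rightarrow> real \<Rightarrow> bool" where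
  "grad_y_bound k B \<longleftrightarrow> (\<forall>s y w. \<exists>D. ((\<lambda>y'. k s y' w) has_derivative D) (at y) \<and> onorm D \<le> B)"

end

theory Submission
  imports Defs
begin


lemma matrix_inv_eq:
  fixes A B :: "real^'n^'n"
  assumes "A ** B = mat 1" "B ** A = mat 1"
  shows "matrix_inv A = B"
proof -
  have "\<exists>A'. A ** A' = mat 1 \<and> A' ** A = mat 1" using assms by blast
  hence h: "A ** matrix_inv A = mat 1 \<and> matrix_inv A ** A = mat 1"
    unfolding matrix_inv_def by (rule someI_ex)
  have "matrix_inv A = matrix_inv A ** (A ** B)" using assms by (simp add: matrix_mul_rid)
  also have "\<dots> = (matrix_inv A ** A) ** B" by (simp add: matrix_mul_assoc)
  also have "\<dots> = B" using h by (simp add: matrix_mul_lid)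
  finally show ?thesis .
qed

lemma mat2_nth[simp]:
  "mat2 a b c e $ 1 $ 1 = a" "mat2 a b c e $ 1 $ 2 = b"
  "mat2 a b c e $ 2 $ 1 = c" "mat2 a b c e $ 2 $ 2 = e"
  by (simp_all add: mat2_def)

lemma mat2_eq: "(M::real^2^2) = mat2 (M$1$1) (M$1$2) (M$2$1) (M$2$2)"
  by (simp add: vec_eq_iff forall_2 mat2_def)

lemma mat2_mult: "mat2 a b c e ** mat2 a' b' c' e' =
   mat2 (a*a' + b*c') (a*b'+b*e') (c*a'+e*c') (c*b'+e*e')"
  by (simp add: vec_eq_iff forall_2 matrix_matrix_mult_def sum_2 mat2_def)

lemma mat2_one: "(mat 1 :: real^2^2) = mat2 1 0 0 1"
  by (simp add: vec_eq_iff forall_2 mat_def mat2_def)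

lemma mat2_inv_aux:
  fixes a b c e D :: real
  assumes "D \<noteq> 0" "D = a*e-b*c"
  shows "a * (e / D) + b * (- c / D) = 1 \<and> a * (- b / D) + b * (a / D) = 0 \<and>
    c * (e / D) + e * (- c / D) = 0 \<and> c * (- b / D) + e * (a / D) = 1 \<and>
    e / D * a + - b / D * c = 1 \<and> e / D * b + - b / D * e = 0 \<and>
    - c / D * a + a / D * c = 0 \<and> - c / D * b + a / D * e = 1"
proof -
  have "a * (e / D) + b * (- c / D) = (a*e-b*c)/D" "c * (- b / D) + e * (a / D) = (a*e-b*c)/D"
    "e / D * a + - b / D * c = (a*e-b*c)/D" "- c / D * b + a / D * e = (a*e-b*c)/D"
    by (simp_all add: diff_divide_distrib algebra_simps)
  moreover have "(a*e-b*c)/D = 1" using assms by simp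
  moreover have "a * (- b / D) + b * (a / D) = 0" "c * (e / D) + e * (- c / D) = 0"
    "e / D * b + - b / D * e = 0" "- c / D * a + a / D * c = 0"
    by (simp_all add: algebra_simps)
  ultimately show ?thesis by simp
qed

lemma mat2_inv:
  assumes "a*e - b*c \<noteq> 0"
  shows "matrix_inv (mat2 a b c e) = mat2 (e/(a*e-b*c)) (-b/(a*e-b*c)) (-c/(a*e-b*c)) (a/(a*e-b*c))"
proof (rule matrix_inv_eq)
  let ?D = "a*e-b*c"
  have 1: "a * (e / ?D) + b * (- c / ?D) = 1" "a * (- b / ?D) + b * (a / ?D) = 0"
    "c * (e / ?D) + e * (- c / ?D) = 0" "c * (- b / ?D) + e * (a / ?D) = 1"
    "e / ?D * a + - b / ?D * c = 1" "e / ?D * b + - b / ?D * e = 0"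
    "- c / ?D * a + a / ?D * c = 0" "- c / ?D * b + a / ?D * e = 1"
    using mat2_inv_aux[OF assms refl] by auto
  show "mat2 a b c e ** mat2 (e / ?D) (- b / ?D) (- c / ?D) (a / ?D) = mat 1"
    "mat2 (e / ?D) (- b / ?D) (- c / ?D) (a / ?D) ** mat2 a b c e = mat 1"
    unfolding mat2_mult mat2_one 1 by simp_all
qed

lemma blk_act_mat2: "blk_act (mat2 a b c e) (x, v) = (a *\<^sub>R x + b *\<^sub>R v, c *\<^sub>R x + e *\<^sub>R v)"
  by (simp add: blk_act_def)

lemma blk_act_mult: "blk_act (P ** Q) z = blk_act P (blk_act Q z)"
  apply (subst mat2_eq[of P], subst mat2_eq[of Q], subst mat2_eq[of "P**Q"])
  apply (cases z)
  by (simp add: blk_act_def matrix_matrix_mult_def sum_2 algebra_simps scaleR_add_right)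




lemma g1_has_deriv:
  assumes "r > 0"
  shows "(g1 b has_real_derivative r powr (b-1) * (b* sin(ln r) + cos(ln r))) (at r)"
proof -
  have "(g1 b has_real_derivative (b * r powr (b-1)) * sin(ln r) + r powr b * (cos(ln r) * inverse r)) (at r)"
    unfolding g1_def[abs_def] using assms
    by (auto intro!: derivative_eq_intros simp: divide_inverse)
  moreover have "(b * r powr (b-1)) * sin(ln r) + r powr b * (cos(ln r) * inverse r) = r powr (b-1) * (b* sin(ln r) + cos(ln r))"
    using assms by (simp add: powr_diff field_simps)
  ultimately show ?thesis by simp
qed

lemma g2_has_deriv:
  assumes "r > 0"
  shows "(g2 b has_real_derivative r powr (b-1) * (b * cos(ln r) - sin(ln r))) (at r)"
proof -
  have "(g2 b has_real_derivative (b * r powr (b-1)) * cos(ln r) + r powr b * (-sin(ln r) * inverse r)) (at r)"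
    unfolding g2_def[abs_def] using assms
    by (auto intro!: derivative_eq_intros simp: divide_inverse)
  moreover have "(b * r powr (b-1)) * cos(ln r) + r powr b * (-sin(ln r) * inverse r) = r powr (b-1) * (b * cos(ln r) - sin(ln r))"
    using assms by (simp add: powr_diff field_simps)
  ultimately show ?thesis by simp
qed

lemma g1_deriv: "r > 0 \<Longrightarrow> deriv (g1 b) r = r powr (b-1) * (b* sin(ln r) + cos(ln r))"
  using g1_has_deriv DERIV_imp_deriv by blast
lemma g2_deriv: "r > 0 \<Longrightarrow> deriv (g2 b) r = r powr (b-1) * (b * cos(ln r) - sin(ln r))"
  using g2_has_deriv DERIV_imp_deriv by blast

lemma h_has_deriv:
  assumes "r > 0"
  shows "((\<lambda>x. x powr (b-1) * (u * sin(ln x) + v * cos(ln x))) has_real_derivative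
     r powr (b-2) * ((b-1)*(u * sin(ln r) + v * cos(ln r)) + (u * cos(ln r) - v * sin(ln r)))) (at r)"
proof -
  have "((\<lambda>x. x powr (b-1) * (u * sin(ln x) + v * cos(ln x))) has_real_derivative
     ((b-1) * r powr (b-1-1)) * (u * sin(ln r) + v * cos(ln r)) + r powr (b-1) * (u *(cos(ln r) * inverse r) + v *(-sin(ln r) * inverse r))) (at r)"
    using assms by (auto intro!: derivative_eq_intros simp: divide_inverse)
  moreover have "((b-1) * r powr (b-1-1)) * (u * sin(ln r) + v * cos(ln r)) + r powr (b-1) * (u *(cos(ln r) * inverse r) + v *(-sin(ln r) * inverse r))
     = r powr (b-2) * ((b-1)*(u * sin(ln r) + v * cos(ln r)) + (u * cos(ln r) - v * sin(ln r)))"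
  proof -
    have "r powr (b-1) * inverse r = r powr (b-2)" using assms
      by (simp add: powr_diff divide_inverse[symmetric] powr_minus_divide power2_eq_square)
    moreover have "b-1-1 = b-2" by simp
    moreover have "((b-1) * r powr (b-1-1)) * (u * sin(ln r) + v * cos(ln r)) + r powr (b-1) * (u *(cos(ln r) * inverse r) + v *(-sin(ln r) * inverse r))
      = ((b-1) * r powr (b-1-1)) * (u * sin(ln r) + v * cos(ln r)) + (u * cos(ln r) - v * sin(ln r)) * (r powr (b-1) * inverse r)"
      by (simp add: algebra_simps)
    ultimately show ?thesis by (simp add: algebra_simps)
  qed
  ultimately show ?thesis by simp
qed

lemma g1_deriv2:
  assumes "r > 0"
  shows "deriv (deriv (g1 b)) r = r powr (b-2) * ((b-1)*(b* sin(ln r) + 1 * cos(ln r)) + (b * cos(ln r) - 1* sin(ln r)))"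
proof -
  have "((deriv (g1 b)) has_real_derivative r powr (b-2) * ((b-1)*(b* sin(ln r) + 1 * cos(ln r)) + (b * cos(ln r) - 1* sin(ln r)))) (at r)"
    apply (rule has_field_derivative_transform_within_open[OF h_has_deriv[OF assms, of b b 1], where S="{0<..}"])
    using assms g1_deriv by auto
  thus ?thesis using DERIV_imp_deriv by blast
qed

lemma g2_deriv2:
  assumes "r > 0"
  shows "deriv (deriv (g2 b)) r = r powr (b-2) * ((b-1)*((-1)* sin(ln r) + b * cos(ln r)) + ((-1) * cos(ln r) - b* sin(ln r)))"
proof -
  have "((deriv (g2 b)) has_real_derivative r powr (b-2) * ((b-1)*((-1)* sin(ln r) + b * cos(ln r)) + ((-1) * cos(ln r) - b* sin(ln r)))) (at r)"
    apply (rule has_field_derivative_transform_within_open[OF h_has_deriv[OF assms, of b "-1" b], where S="{0<..}"])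
    using assms g2_deriv by auto
  thus ?thesis using DERIV_imp_deriv by blast
qed




lemma mat2_inject: "mat2 a b c e = mat2 a' b' c' e' \<longleftrightarrow> a=a' \<and> b=b' \<and> c=c' \<and> e=e'"
  by (metis mat2_nth)

lemma inv_aux:
  fixes p q t S C b :: real
  assumes "p \<noteq> 0" "q \<noteq> 0" "t \<noteq> 0" "S*S + C*C = 1"
  shows "mat2 (q*S) (q*C) (p*(b*S+C)/t) (p*(b*C-S)/t) ** mat2 (-(b*C-S)/q) (t*C/p) ((b*S+C)/q) (-t*S/p) = mat 1"
    "mat2 (-(b*C-S)/q) (t*C/p) ((b*S+C)/q) (-t*S/p) ** mat2 (q*S) (q*C) (p*(b*S+C)/t) (p*(b*C-S)/t) = mat 1"
proof -
  have e1: "q * S * (- (b * C - S) / q) + q * C * ((b * S + C) / q) = 1"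
    using assms by (simp add: field_simps) algebra
  have e2: "q * S * (t * C / p) + q * C * (- t * S / p) = 0"
    using assms by (simp add: field_simps)
  have e3: "p * (b * S + C) / t * (- (b * C - S) / q) + p * (b * C - S) / t * ((b * S + C) / q) = 0"
    using assms by (simp add: field_simps)
  have e4: "p * (b * S + C) / t * (t * C / p) + p * (b * C - S) / t * (- t * S / p) = 1"
    using assms by (simp add: field_simps) algebra
  have f1: "- (b * C - S) / q * (q * S) + t * C / p * (p * (b * S + C) / t) = 1"
    using assms by (simp add: field_simps) algebra
  have f2: "- (b * C - S) / q * (q * C) + t * C / p * (p * (b * C - S) / t) = 0"
    using assms by (simp add: field_simps)
  have f3: "(b * S + C) / q * (q * S) + - t * S / p * (p * (b * S + C) / t) = 0"
    using assms by (simp add: field_simps)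
  have f4: "(b * S + C) / q * (q * C) + - t * S / p * (p * (b * C - S) / t) = 1"
    using assms by (simp add: field_simps) algebra
  show "mat2 (q*S) (q*C) (p*(b*S+C)/t) (p*(b*C-S)/t) ** mat2 (-(b*C-S)/q) (t*C/p) ((b*S+C)/q) (-t*S/p) = mat 1"
    "mat2 (-(b*C-S)/q) (t*C/p) ((b*S+C)/q) (-t*S/p) ** mat2 (q*S) (q*C) (p*(b*S+C)/t) (p*(b*C-S)/t) = mat 1"
    unfolding mat2_mult mat2_one mat2_inject using e1 e2 e3 e4 f1 f2 f3 f4 by simp_all
qed




lemma Dinv: "t \<noteq> 0 \<Longrightarrow> matrix_inv (Dmat t) = mat2 1 0 0 (1/t)"
  unfolding Dmat_def by (subst mat2_inv) auto

lemma Amat_eq: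
  assumes "r > 0" "t \<noteq> 0"
  shows "Amat b t r = mat2 (r powr b * sin (ln r)) (r powr b * cos (ln r))
     (r powr (b-1) * (b * sin (ln r) + cos (ln r))/t) (r powr (b-1) * (b * cos (ln r) - sin (ln r))/t)"
  unfolding Amat_def Dinv[OF assms(2)] Wmat_def mat2_mult g1_deriv[OF assms(1)] g2_deriv[OF assms(1)]
  by (simp add: g1_def g2_def)

lemma Pm_eq:
  assumes "r > 0" "t \<noteq> 0"
  shows "matrix_inv (Amat b t r) = mat2 (-(b * cos (ln r) - sin (ln r))/r powr b) (t * cos (ln r)/r powr (b-1))
      ((b * sin (ln r) + cos (ln r))/r powr b) (-t * sin (ln r)/r powr (b-1))"
proof -
  have "Amat b t r = mat2 (r powr b * sin (ln r)) (r powr b * cos (ln r))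
     (r powr (b-1) * (b * sin (ln r) + cos (ln r))/t) (r powr (b-1) * (b * cos (ln r) - sin (ln r))/t)"
    by (rule Amat_eq[OF assms])
  moreover have "sin (ln r) * sin (ln r) + cos (ln r) * cos (ln r) = 1"
    by (metis power2_eq_square sin_cos_squared_add)
  ultimately show ?thesis
    using inv_aux[of "r powr (b-1)" "r powr b" t "sin (ln r)" "cos (ln r)" b] assms
    by (intro matrix_inv_eq) auto
qed




lemma iter_trans: "iter_dderiv g h \<Longrightarrow> iter_dderiv f g \<Longrightarrow> iter_dderiv f h"
proof (induction rule: iter_dderiv.induct)
  case base
  then show ?case by simp
next
  case (step h v)
  then show ?case by (simp add: iter_dderiv.step)
qed

lemma smooth_iter: "smooth_fun f \<Longrightarrow> iter_dderiv f g \<Longrightarrow> smooth_fun g"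
  unfolding smooth_fun_def using iter_trans by metis

lemma smooth_diff: "smooth_fun f \<Longrightarrow> f differentiable (at x)"
  unfolding smooth_fun_def using iter_dderiv.base by metis

lemma smooth_cont: "smooth_fun f \<Longrightarrow> continuous_on UNIV f"
  unfolding smooth_fun_def using iter_dderiv.base by metis

lemma iter_zero_outside:
  assumes "iter_dderiv f g" "x \<notin> closure {z. f z \<noteq> 0}"
  shows "g x = 0"
  using assms
proof (induction arbitrary: x rule: iter_dderiv.induct)
  case base
  then have "x \<notin> {z. f z \<noteq> 0}" using closure_subset by (metis subsetD)
  then show ?case by simp
next
  case (step g v)
  let ?U = "- closure {z. f z \<noteq> 0}"
  have "open ?U" by (simp add: open_Compl)
  have "x \<in> ?U" using step.prems by simp
  have "((\<lambda>_. 0) has_derivative (\<lambda>_. 0)) (at x)" by (rule has_derivative_const)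
  hence "(g has_derivative (\<lambda>_. 0)) (at x)"
  proof (rule has_derivative_transform_within_open[OF _ \<open>open ?U\<close> \<open>x \<in> ?U\<close>])
    fix y assume "y \<in> ?U"
    then show "0 = g y" using step.IH[of y] by simp
  qed
  hence "frechet_derivative g (at x) = (\<lambda>_. 0)" using frechet_derivative_at by metis
  then show ?case by simp
qed
lemma smooth_bounded:
  fixes f :: "'a::euclidean_space \<Rightarrow> real"
  assumes "smooth_fun f" "compact (closure {z. f z \<noteq> 0})"
  shows "\<exists>B\<ge>0. \<forall>x. \<bar>f x\<bar> \<le> B"
proof -
  let ?S = "closure {z. f z \<noteq> 0}"
  have "continuous_on ?S f" by (rule continuous_on_subset[OF smooth_cont[OF assms(1)]]) simp
  hence "compact (f ` ?S)" by (rule compact_continuous_image[OF _ assms(2)])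
  then have "bounded (f ` ?S)" by (rule compact_imp_bounded)
  then obtain B where B: "\<forall>y\<in>f ` ?S. norm y \<le> B" unfolding bounded_iff by blast
  have "\<forall>x. \<bar>f x\<bar> \<le> max B 0"
  proof
    fix x
    show "\<bar>f x\<bar> \<le> max B 0"
    proof (cases "x \<in> ?S")
      case True then have "norm (f x) \<le> B" using B by blast
      then show ?thesis by simp
    next
      case False then have "x \<notin> {z. f z \<noteq> 0}" using closure_subset by (metis subsetD)
      then show ?thesis by simp
    qed
  qed
  then show ?thesis by (intro exI[of _ "max B 0"]) simp
qed

lemma lin_basis_bound:
  fixes f :: "'a::euclidean_space \<Rightarrow> real"
  assumes "linear f" "\<And>e. e \<in> Basis \<Longrightarrow> \<bar>f e\<bar> \<le> B"
  shows "\<bar>f u\<bar> \<le> (real DIM('a) * B) * norm u"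
proof -
  have "f u = f (\<Sum>e\<in>Basis. inner u e *\<^sub>R e)" by (simp only: euclidean_representation)
  also have "\<dots> = (\<Sum>e\<in>Basis. inner u e * f e)"
    using assms(1) by (simp add: linear_sum linear_scale)
  finally have "\<bar>f u\<bar> \<le> (\<Sum>e\<in>Basis. \<bar>inner u e * f e\<bar>)" by (simp only: sum_abs)
  also have "\<dots> \<le> (\<Sum>e\<in>(Basis::'a set). norm u * B)"
  proof (rule sum_mono)
    fix e :: 'a assume e: "e \<in> Basis"
    have "\<bar>inner u e\<bar> \<le> norm u" using Basis_le_norm e by blast
    moreover have "\<bar>f e\<bar> \<le> B" using assms(2) e by blast
    ultimately show "\<bar>inner u e * f e\<bar> \<le> norm u * B"
      by (simp add: abs_mult mult_mono)
  qed
  also have "\<dots> = (real DIM('a) * B) * norm u" by simp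
  finally show ?thesis .
qed

lemma smooth_deriv_bound:
  fixes f :: "'a::euclidean_space \<Rightarrow> real"
  assumes "smooth_fun f" "compact (closure {z. f z \<noteq> 0})"
  shows "\<exists>B\<ge>0. \<forall>x u. \<bar>frechet_derivative f (at x) u\<bar> \<le> B * norm u"
proof -
  have "\<forall>e\<in>(Basis::'a set). \<exists>B\<ge>0. \<forall>x. \<bar>frechet_derivative f (at x) e\<bar> \<le> B"
  proof
    fix e :: 'a
    let ?g = "\<lambda>x. frechet_derivative f (at x) e"
    have ig: "iter_dderiv f ?g" using iter_dderiv.step[OF iter_dderiv.base] .
    have sg: "smooth_fun ?g" using smooth_iter[OF assms(1) ig] .
    have "closure {z. ?g z \<noteq> 0} \<subseteq> closure {z. f z \<noteq> 0}"
    proof (rule closure_minimal)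
      show "{z. ?g z \<noteq> 0} \<subseteq> closure {z. f z \<noteq> 0}"
        using iter_zero_outside[OF ig] by blast
    qed simp
    hence "compact (closure {z. ?g z \<noteq> 0})"
      using assms(2) compact_Int_closed[of "closure {z. f z \<noteq> 0}" "closure {z. ?g z \<noteq> 0}"]
      by (simp add: Int_absorb1)
    then show "\<exists>B\<ge>0. \<forall>x. \<bar>?g x\<bar> \<le> B" by (rule smooth_bounded[OF sg])
  qed
  then obtain Bf where Bf: "\<And>e. e \<in> (Basis::'a set) \<Longrightarrow> Bf e \<ge> 0 \<and> (\<forall>x. \<bar>frechet_derivative f (at x) e\<bar> \<le> Bf e)"
    by metis
  define B where "B = (\<Sum>e\<in>(Basis::'a set). Bf e)"
  have B0: "0 \<le> real DIM('a) * B" using Bf unfolding B_def by (simp add: sum_nonneg)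
  have "\<forall>x u. \<bar>frechet_derivative f (at x) u\<bar> \<le> real DIM('a) * B * norm u"
  proof (intro allI)
    fix x u
    have "(f has_derivative frechet_derivative f (at x)) (at x)"
      using smooth_diff[OF assms(1)] frechet_derivative_works by blast
    hence lin: "linear (frechet_derivative f (at x))" by (rule has_derivative_linear)
    have "\<And>e. e \<in> (Basis::'a set) \<Longrightarrow> \<bar>frechet_derivative f (at x) e\<bar> \<le> B"
    proof -
      fix e :: 'a assume e: "e \<in> Basis"
      have "Bf e \<le> B" unfolding B_def using Bf e by (intro member_le_sum) auto
      moreover have "\<bar>frechet_derivative f (at x) e\<bar> \<le> Bf e" using Bf e by blast
      ultimately show "\<bar>frechet_derivative f (at x) e\<bar> \<le> B" by linarith
    qed
    then show "\<bar>frechet_derivative f (at x) u\<bar> \<le> real DIM('a) * B * norm u"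
      by (rule lin_basis_bound[OF lin])
  qed
  then show ?thesis using B0 by blast
qed


lemma lin_expand:
  fixes L :: "'a::euclidean_space \<Rightarrow> real"
  assumes "linear L"
  shows "L u = (\<Sum>e\<in>Basis. inner u e * L e)"
proof -
  have "L u = L (\<Sum>e\<in>Basis. inner u e *\<^sub>R e)" by (simp only: euclidean_representation)
  also have "\<dots> = (\<Sum>e\<in>Basis. inner u e * L e)"
    using assms(1) by (simp add: linear_sum linear_scale)
  finally show ?thesis .
qed

lemma smooth_step_supp:
  fixes f :: "'a::euclidean_space \<Rightarrow> real"
  assumes "smooth_fun f" "compact (closure {z. f z \<noteq> 0})"
  shows "smooth_fun (\<lambda>x. frechet_derivative f (at x) e)"
    "compact (closure {z. frechet_derivative f (at z) e \<noteq> 0})"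
proof -
  let ?g = "\<lambda>x. frechet_derivative f (at x) e"
  have ig: "iter_dderiv f ?g" using iter_dderiv.step[OF iter_dderiv.base] .
  show "smooth_fun ?g" using smooth_iter[OF assms(1) ig] .
  have "closure {z. ?g z \<noteq> 0} \<subseteq> closure {z. f z \<noteq> 0}"
  proof (rule closure_minimal)
    show "{z. ?g z \<noteq> 0} \<subseteq> closure {z. f z \<noteq> 0}"
      using iter_zero_outside[OF ig] by blast
  qed simp
  thus "compact (closure {z. ?g z \<noteq> 0})"
    using assms(2) compact_Int_closed[of "closure {z. f z \<noteq> 0}" "closure {z. ?g z \<noteq> 0}"]
    by (simp add: Int_absorb1)
qed

lemma smooth_deriv2_bound:
  fixes f :: "'a::euclidean_space \<Rightarrow> real"
  assumes "smooth_fun f" "compact (closure {z. f z \<noteq> 0})"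
  shows "\<exists>B\<ge>0. \<forall>x v h. ((\<lambda>x. frechet_derivative f (at x) v) has_derivative
      frechet_derivative (\<lambda>x. frechet_derivative f (at x) v) (at x)) (at x) \<and>
     \<bar>frechet_derivative (\<lambda>x. frechet_derivative f (at x) v) (at x) h\<bar> \<le> B * norm v * norm h"
proof -
  have "\<forall>e\<in>(Basis::'a set). \<exists>B\<ge>0. \<forall>x u. \<bar>frechet_derivative (\<lambda>x. frechet_derivative f (at x) e) (at x) u\<bar> \<le> B * norm u"
  proof
    fix e :: 'a
    show "\<exists>B\<ge>0. \<forall>x u. \<bar>frechet_derivative (\<lambda>x. frechet_derivative f (at x) e) (at x) u\<bar> \<le> B * norm u"
      using smooth_deriv_bound[OF smooth_step_supp[OF assms]] .
  qed
  then obtain Bf where Bf0: "\<forall>e\<in>(Basis::'a set). Bf e \<ge> 0 \<and>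
      (\<forall>x u. \<bar>frechet_derivative (\<lambda>x. frechet_derivative f (at x) e) (at x) u\<bar> \<le> Bf e * norm u)"
    by (rule bchoice[THEN exE])
  hence Bf: "\<And>e. e \<in> (Basis::'a set) \<Longrightarrow> Bf e \<ge> 0 \<and>
      (\<forall>x u. \<bar>frechet_derivative (\<lambda>x. frechet_derivative f (at x) e) (at x) u\<bar> \<le> Bf e * norm u)"
    by blast
  define B where "B = (\<Sum>e\<in>(Basis::'a set). Bf e)"
  have B0: "0 \<le> B" using Bf unfolding B_def by (simp add: sum_nonneg)
  have "\<forall>x v h. ((\<lambda>x. frechet_derivative f (at x) v) has_derivative
      frechet_derivative (\<lambda>x. frechet_derivative f (at x) v) (at x)) (at x) \<and>
     \<bar>frechet_derivative (\<lambda>x. frechet_derivative f (at x) v) (at x) h\<bar> \<le> B * norm v * norm h"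
  proof (intro allI)
    fix x v h
    let ?G = "\<lambda>e x. frechet_derivative f (at x) e"
    have lin: "\<And>y. linear (frechet_derivative f (at y))"
      by (rule has_derivative_linear[OF frechet_derivative_works[THEN iffD1, OF smooth_diff[OF assms(1)]]])
    have eq: "(\<lambda>x. frechet_derivative f (at x) v) = (\<lambda>x. \<Sum>e\<in>Basis. inner v e * ?G e x)"
      by (rule ext) (rule lin_expand[OF lin])
    have dG: "\<And>e. (?G e has_derivative frechet_derivative (?G e) (at x)) (at x)"
      by (rule frechet_derivative_works[THEN iffD1, OF smooth_diff[OF smooth_step_supp(1)[OF assms]]])
    have hd: "((\<lambda>x. \<Sum>e\<in>Basis. inner v e * ?G e x) has_derivative
        (\<lambda>h. \<Sum>e\<in>Basis. inner v e * frechet_derivative (?G e) (at x) h)) (at x)"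
      by (intro has_derivative_sum has_derivative_mult_right dG)
    have hd': "((\<lambda>x. frechet_derivative f (at x) v) has_derivative
        (\<lambda>h. \<Sum>e\<in>Basis. inner v e * frechet_derivative (?G e) (at x) h)) (at x)"
      unfolding eq by (rule hd)
    have fd: "frechet_derivative (\<lambda>x. frechet_derivative f (at x) v) (at x) =
        (\<lambda>h. \<Sum>e\<in>Basis. inner v e * frechet_derivative (?G e) (at x) h)"
      by (rule frechet_derivative_at[OF hd', symmetric])
    have "\<bar>\<Sum>e\<in>Basis. inner v e * frechet_derivative (?G e) (at x) h\<bar>
        \<le> (\<Sum>e\<in>Basis. \<bar>inner v e * frechet_derivative (?G e) (at x) h\<bar>)" by (rule sum_abs)
    also have "\<dots> \<le> (\<Sum>e\<in>(Basis::'a set). norm v * (Bf e * norm h))"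
    proof (rule sum_mono)
      fix e :: 'a assume e: "e \<in> Basis"
      have "\<bar>inner v e\<bar> \<le> norm v" using Basis_le_norm e by blast
      moreover have "\<bar>frechet_derivative (?G e) (at x) h\<bar> \<le> Bf e * norm h" using Bf e by blast
      ultimately show "\<bar>inner v e * frechet_derivative (?G e) (at x) h\<bar> \<le> norm v * (Bf e * norm h)"
        by (simp add: abs_mult mult_mono)
    qed
    also have "\<dots> = B * norm v * norm h" unfolding B_def
      by (simp add: sum_distrib_left sum_distrib_right mult.commute mult.left_commute)
    finally show "((\<lambda>x. frechet_derivative f (at x) v) has_derivative
      frechet_derivative (\<lambda>x. frechet_derivative f (at x) v) (at x)) (at x) \<and>
     \<bar>frechet_derivative (\<lambda>x. frechet_derivative f (at x) v) (at x) h\<bar> \<le> B * norm v * norm h"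
      using fd hd' by simp
  qed
  then show ?thesis using B0 by blast
qed





definition Kb :: "real \<Rightarrow> real" where "Kb b = 2*(b+1)^2"
definition P11 :: "real \<Rightarrow> real \<Rightarrow> real" where "P11 b r = -(b * cos (ln r) - sin (ln r))/r powr b"
definition P12 :: "real \<Rightarrow> real \<Rightarrow> real \<Rightarrow> real" where "P12 b t r = t * cos (ln r)/r powr (b-1)"
definition P21 :: "real \<Rightarrow> real \<Rightarrow> real" where "P21 b r = (b * sin (ln r) + cos (ln r))/r powr b"
definition P22 :: "real \<Rightarrow> real \<Rightarrow> real \<Rightarrow> real" where "P22 b t r = -t * sin (ln r)/r powr (b-1)"

lemma Mop_eq:
  assumes "r > 0" "s \<noteq> 0"
  shows "Mop b r s (y, w) = (P11 b r *\<^sub>R y + P12 b (s/r) r *\<^sub>R w, P21 b r *\<^sub>R y + P22 b (s/r) r *\<^sub>R w)"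
proof -
  have "s/r \<noteq> 0" using assms by simp
  then show ?thesis unfolding Mop_def Pm_eq[OF assms(1) \<open>s/r \<noteq> 0\<close>] blk_act_mat2 P11_def P12_def P21_def P22_def
    by simp
qed

lemma blk_act_one: "blk_act (mat 1) z = z"
  by (cases z) (simp add: mat2_one blk_act_mat2)

lemma Amat_Pinv:
  assumes "r > 0" "t \<noteq> 0"
  shows "Amat b t r ** matrix_inv (Amat b t r) = mat 1"
proof -
  have "sin (ln r) * sin (ln r) + cos (ln r) * cos (ln r) = 1"
    by (metis power2_eq_square sin_cos_squared_add)
  then show ?thesis
    apply (subst Pm_eq[OF assms])
    apply (subst Amat_eq[OF assms])
    using inv_aux(1)[of "r powr (b-1)" "r powr b" t "sin (ln r)" "cos (ln r)" b] assms by simp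
qed

lemma Mop_inv:
  assumes "r > 0" "s \<noteq> 0"
  shows "blk_act (Amat b (s/r) r) (Mop b r s z) = z"
proof -
  have "s/r \<noteq> 0" using assms by simp
  show ?thesis unfolding Mop_def blk_act_mult[symmetric] Amat_Pinv[OF assms(1) \<open>s/r \<noteq> 0\<close>] blk_act_one ..
qed

lemma Kb_ge: "b > 1 \<Longrightarrow> b + 1 \<le> Kb b \<and> 2 \<le> Kb b \<and> 2*(b+1) \<le> Kb b \<and> b*(b+1) \<le> Kb b \<and> 1 \<le> Kb b"
proof -
  assume "b > 1"
  have "b * b \<ge> 0" by simp
  moreover have "b*(b+1) = b*b + b" "2*(b+1)^2 = 2*(b*b) + 4*b + 2" by (simp_all add: power2_eq_square algebra_simps)
  ultimately show ?thesis unfolding Kb_def using \<open>b > 1\<close> by (simp add: algebra_simps power2_eq_square)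
qed

lemma trig_bd: "b > 0 \<Longrightarrow> \<bar>b * u + v\<bar> \<le> b + 1" "b > 0 \<Longrightarrow> \<bar>b * u - v\<bar> \<le> b + 1"
  if "\<bar>u\<bar> \<le> 1" "\<bar>v\<bar> \<le> 1" for u v b :: real
proof -
  assume "b > 0"
  have "\<bar>b*u\<bar> \<le> b" using that \<open>b>0\<close> by (simp add: abs_mult mult_le_cancel_left1)
  then show "\<bar>b * u + v\<bar> \<le> b + 1" "\<bar>b * u - v\<bar> \<le> b + 1" using that by linarith+
qed

lemma P_bounds:
  assumes "b > 1" "r > 0" "\<bar>t\<bar> \<le> 2"
  shows "\<bar>P11 b r\<bar> \<le> Kb b * r powr (-b)" "\<bar>P21 b r\<bar> \<le> Kb b * r powr (-b)"
    "\<bar>P12 b t r\<bar> \<le> Kb b * r powr (1-b)" "\<bar>P22 b t r\<bar> \<le> Kb b * r powr (1-b)"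
proof -
  have b0: "b > 0" using assms by simp
  have pos: "r powr b > 0" "r powr (b-1) > 0" using assms by auto
  have e1: "r powr (-b) = 1 / r powr b" by (simp add: powr_minus divide_inverse)
  have e2: "r powr (1-b) = 1 / r powr (b-1)"
    using powr_minus[of r "b-1"] by (simp add: divide_inverse)
  have K: "b + 1 \<le> Kb b" "2 \<le> Kb b" using Kb_ge[OF assms(1)] by auto
  have sc: "\<bar>sin (ln r)\<bar> \<le> 1" "\<bar>cos (ln r)\<bar> \<le> 1" by auto
  have "\<bar>b * cos (ln r) - sin (ln r)\<bar> \<le> Kb b" using trig_bd(2)[OF sc(2) sc(1) b0] K by linarith
  then show "\<bar>P11 b r\<bar> \<le> Kb b * r powr (-b)" unfolding P11_def e1 using pos
    by (simp add: divide_right_mono)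
  have "\<bar>b * sin (ln r) + cos (ln r)\<bar> \<le> Kb b" using trig_bd(1)[OF sc b0] K by linarith
  then show "\<bar>P21 b r\<bar> \<le> Kb b * r powr (-b)" unfolding P21_def e1 using pos
    by (simp add: divide_right_mono)
  have "\<bar>t\<bar> * \<bar>cos (ln r)\<bar> \<le> 2 * 1" using assms(3) sc by (intro mult_mono) auto
  hence "\<bar>t * cos (ln r)\<bar> \<le> 2" by (simp add: abs_mult)
  then have "\<bar>t * cos (ln r)\<bar> \<le> Kb b" using K by linarith
  then show "\<bar>P12 b t r\<bar> \<le> Kb b * r powr (1-b)" unfolding P12_def e2 using pos
    by (simp add: divide_right_mono)
  have "\<bar>t\<bar> * \<bar>sin (ln r)\<bar> \<le> 2 * 1" using assms(3) sc by (intro mult_mono) auto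
  hence "\<bar>-t * sin (ln r)\<bar> \<le> 2" by (simp add: abs_mult)
  then have "\<bar>-t * sin (ln r)\<bar> \<le> Kb b" using K by linarith
  then show "\<bar>P22 b t r\<bar> \<le> Kb b * r powr (1-b)" unfolding P22_def e2 using pos
    by (simp add: divide_right_mono)
qed


lemma supp_bound:
  assumes "b > 1" "r > 0" "s \<noteq> 0" "1 \<le> \<bar>s/r\<bar>" "Mop b r s (y, w) = (x, v)" "norm x \<le> 1" "norm v \<le> 1"
  shows "norm y \<le> Kb b * r powr b" "norm w \<le> Kb b * r powr (b-1)"
proof -
  let ?t = "s/r" and ?S = "sin (ln r)" and ?C = "cos (ln r)"
  have t0: "?t \<noteq> 0" using assms by simp
  have "(y, w) = blk_act (Amat b ?t r) (x, v)" using Mop_inv[OF assms(2,3), of b "(y,w)"] assms(5) by simp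
  also have "\<dots> = ((r powr b * ?S) *\<^sub>R x + (r powr b * ?C) *\<^sub>R v,
      (r powr (b-1) * (b * ?S + ?C)/?t) *\<^sub>R x + (r powr (b-1) * (b * ?C - ?S)/?t) *\<^sub>R v)"
    unfolding Amat_eq[OF assms(2) t0] blk_act_mat2 ..
  finally have yw: "y = (r powr b * ?S) *\<^sub>R x + (r powr b * ?C) *\<^sub>R v"
     "w = (r powr (b-1) * (b * ?S + ?C)/?t) *\<^sub>R x + (r powr (b-1) * (b * ?C - ?S)/?t) *\<^sub>R v" by auto
  have K: "2 \<le> Kb b" "2*(b+1) \<le> Kb b" using Kb_ge[OF assms(1)] by auto
  have pos: "r powr b > 0" "r powr (b-1) > 0" using assms by auto
  have sc: "\<bar>?S\<bar> \<le> 1" "\<bar>?C\<bar> \<le> 1" by auto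
  have n1: "norm ((c::real) *\<^sub>R (z::real^'d)) \<le> \<bar>c\<bar>" if "norm z \<le> 1" for c z
    using that by (simp add: mult_left_le)
  have a1: "\<bar>r powr b * ?S\<bar> \<le> r powr b" "\<bar>r powr b * ?C\<bar> \<le> r powr b"
    using pos sc by (simp_all add: abs_mult mult_left_le)
  have "norm y \<le> norm ((r powr b * ?S) *\<^sub>R x) + norm ((r powr b * ?C) *\<^sub>R v)"
    unfolding yw(1) by (rule norm_triangle_ineq)
  also have "\<dots> \<le> r powr b + r powr b" using n1[OF assms(6)] n1[OF assms(7)] a1
    by (meson add_mono order_trans)
  also have "\<dots> \<le> Kb b * r powr b" using K pos by (simp add: mult_right_mono flip: mult_2)
  finally show "norm y \<le> Kb b * r powr b" .
  have itg: "\<bar>1/t'\<bar> \<le> 1" if "1 \<le> \<bar>t'\<bar>" for t' :: real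
    using that by (simp add: divide_le_eq_1)
  have it: "\<bar>1/?t\<bar> \<le> 1" by (rule itg[OF assms(4)])
  have b0: "b > 0" using assms by simp
  have q: "\<bar>r powr (b-1) * X/?t\<bar> \<le> r powr (b-1) * (b+1)" if "\<bar>X\<bar> \<le> b+1" for X
  proof -
    have "\<bar>r powr (b-1) * X/?t\<bar> = r powr (b-1) * (\<bar>X\<bar> * \<bar>1/?t\<bar>)" using pos by (simp add: abs_mult)
    also have "\<dots> \<le> r powr (b-1) * ((b+1) * 1)" using pos that it
      by (intro mult_left_mono mult_mono) auto
    finally show ?thesis by simp
  qed
  have a2: "\<bar>r powr (b-1) * (b * ?S + ?C)/?t\<bar> \<le> r powr (b-1) * (b+1)"
    "\<bar>r powr (b-1) * (b * ?C - ?S)/?t\<bar> \<le> r powr (b-1) * (b+1)"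
    using q trig_bd[OF sc b0] trig_bd(2)[OF sc(2) sc(1) b0] by auto
  have "norm w \<le> norm ((r powr (b-1) * (b * ?S + ?C)/?t) *\<^sub>R x) + norm ((r powr (b-1) * (b * ?C - ?S)/?t) *\<^sub>R v)"
    unfolding yw(2) by (rule norm_triangle_ineq)
  also have "\<dots> \<le> r powr (b-1) * (b+1) + r powr (b-1) * (b+1)" using n1[OF assms(6)] n1[OF assms(7)] a2
    by (meson add_mono order_trans)
  also have "\<dots> = (2*(b+1)) * r powr (b-1)" by simp
  also have "\<dots> \<le> Kb b * r powr (b-1)" using K pos by (intro mult_right_mono) auto
  finally show "norm w \<le> Kb b * r powr (b-1)" .
qed

lemma F_bound:
  assumes "b > 1" "r > 0" "1 \<le> \<bar>t\<bar>"
  shows "\<bar>inverse t * deriv (deriv (g1 b)) r\<bar> \<le> Kb b * r powr (b-2)"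
    "\<bar>inverse t * deriv (deriv (g2 b)) r\<bar> \<le> Kb b * r powr (b-2)"
proof -
  let ?S = "sin (ln r)" and ?C = "cos (ln r)"
  have b0: "b > 0" using assms by simp
  have sc: "\<bar>?S\<bar> \<le> 1" "\<bar>?C\<bar> \<le> 1" by auto
  have it: "\<bar>inverse t\<bar> \<le> 1" using assms(3) by (simp add: inverse_le_1_iff)
  have pos: "r powr (b-2) > 0" using assms by simp
  have K: "b*(b+1) \<le> Kb b" using Kb_ge[OF assms(1)] by auto
  have gen: "\<bar>inverse t * (r powr (b-2) * ((b-1)*X + Y))\<bar> \<le> Kb b * r powr (b-2)"
    if "\<bar>X\<bar> \<le> b+1" "\<bar>Y\<bar> \<le> b+1" for X Y
  proof -
    have "\<bar>(b-1)*X\<bar> \<le> (b-1)*(b+1)" using that assms(1) by (simp add: abs_mult mult_left_mono)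
    hence "\<bar>(b-1)*X + Y\<bar> \<le> (b-1)*(b+1) + (b+1)" using that by linarith
    also have "\<dots> = b*(b+1)" by (simp add: algebra_simps)
    finally have h: "\<bar>(b-1)*X + Y\<bar> \<le> Kb b" using K by linarith
    have "\<bar>inverse t * (r powr (b-2) * ((b-1)*X + Y))\<bar> = \<bar>inverse t\<bar> * (\<bar>(b-1)*X + Y\<bar> * r powr (b-2))"
      using pos by (simp add: abs_mult)
    also have "\<dots> \<le> 1 * (Kb b * r powr (b-2))" using it h pos
      by (intro mult_mono mult_right_mono) auto
    finally show ?thesis by simp
  qed
  show "\<bar>inverse t * deriv (deriv (g1 b)) r\<bar> \<le> Kb b * r powr (b-2)"
    unfolding g1_deriv2[OF assms(2)]
    by (rule gen) (use trig_bd[OF sc b0] trig_bd(2)[OF sc(2) sc(1) b0] in auto)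
  have e: "\<bar>(-1) * ?C - b * ?S\<bar> = \<bar>b * ?S + ?C\<bar>" "\<bar>(-1) * ?S + b * ?C\<bar> = \<bar>b * ?C - ?S\<bar>"
    by (simp_all add: abs_minus_commute)
  show "\<bar>inverse t * deriv (deriv (g2 b)) r\<bar> \<le> Kb b * r powr (b-2)"
    unfolding g2_deriv2[OF assms(2)]
    by (rule gen) (use trig_bd[OF sc b0] trig_bd(2)[OF sc(2) sc(1) b0] e in auto)
qed




lemma pt_deriv:
  fixes y w :: "real^'d"
  shows "((\<lambda>y. (t::real, (a *\<^sub>R y + c *\<^sub>R w, e *\<^sub>R y + f *\<^sub>R w))) has_derivative (\<lambda>h. (0::real, (a *\<^sub>R h, e *\<^sub>R h)))) (at y)"
  by (auto intro!: derivative_eq_intros)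

lemma pt_norm:
  fixes h :: "real^'d"
  shows "norm (0::real, (a *\<^sub>R h, e *\<^sub>R h)) \<le> (\<bar>a\<bar> + \<bar>e\<bar>) * norm h"
proof -
  have "norm (0::real, (a *\<^sub>R h, e *\<^sub>R h)) = norm (a *\<^sub>R h, e *\<^sub>R h)" by (simp add: norm_Pair)
  also have "\<dots> \<le> norm (a *\<^sub>R h) + norm (e *\<^sub>R h)" by (rule norm_Pair_le)
  also have "\<dots> = (\<bar>a\<bar> + \<bar>e\<bar>) * norm h" by (simp add: algebra_simps)
  finally show ?thesis .
qed

lemma partial_fd:
  assumes "(f has_derivative F) (at (t, q0))"
  shows "frechet_derivative (\<lambda>q. f (t, q)) (at q0) = (\<lambda>u. F (0, u))"
proof -
  have "((\<lambda>q. (t, q)) has_derivative (\<lambda>u. (0, u))) (at q0)"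
    by (auto intro!: derivative_eq_intros)
  from has_derivative_compose[OF this assms]
  have "((\<lambda>q. f (t, q)) has_derivative (\<lambda>u. F (0, u))) (at q0)" .
  then show ?thesis by (rule frechet_derivative_at[symmetric])
qed

lemma vec_sum_axis: "(\<chi> j. a j) = (\<Sum>j\<in>UNIV. a j *\<^sub>R axis j (1::real))"
proof -
  have "\<And>i. (\<Sum>x\<in>UNIV. a x * (if i = x then 1 else 0)) = (\<Sum>x\<in>UNIV. if i = x then a x else 0)"
    by (rule sum.cong) auto
  then show ?thesis by (simp add: vec_eq_iff axis_def)
qed

lemma norm_sum_axis: "norm (\<Sum>j\<in>UNIV. a j *\<^sub>R axis j (1::real)) \<le> (\<Sum>j\<in>UNIV. \<bar>a j\<bar>)"
proof -
  have "norm (\<Sum>j\<in>UNIV. a j *\<^sub>R axis j (1::real)) \<le> (\<Sum>j\<in>UNIV. norm (a j *\<^sub>R axis j (1::real)))"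
    by (rule norm_sum)
  also have "\<dots> = (\<Sum>j\<in>UNIV. \<bar>a j\<bar>)" by simp
  finally show ?thesis .
qed

lemma grad_mono:
  assumes "grad_y_bound k B" "B \<le> B'"
  shows "grad_y_bound k B'"
  unfolding grad_y_bound_def
proof (intro allI)
  fix s y w
  obtain D where "((\<lambda>y'. k s y' w) has_derivative D) (at y)" "onorm D \<le> B"
    using assms(1) unfolding grad_y_bound_def by blast
  then show "\<exists>D. ((\<lambda>y'. k s y' w) has_derivative D) (at y) \<and> onorm D \<le> B'"
    using assms(2) by (intro exI[of _ D]) simp
qed

lemma pw1: "a + c = e \<Longrightarrow> (r::real) powr a * r powr c = r powr e"
  by (simp add: powr_add[symmetric])

lemma pw2: "a + c + e' = e \<Longrightarrow> (r::real) powr a * (r powr c * r powr e') = r powr e"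
  by (simp add: powr_add[symmetric] flip: add.assoc)

lemma mono_bound: "X = c * P \<Longrightarrow> c \<le> C \<Longrightarrow> P \<ge> 0 \<Longrightarrow> X \<le> C * (P::real)"
  by (simp add: mult_right_mono)

locale KL =
  fixes \<psi> :: "real \<times> ((real^'d) \<times> (real^'d)) \<Rightarrow> real" and b B0 B1 B2 :: real
  assumes b1: "b > 1"
  and Ssub: "closure {z. \<psi> z \<noteq> 0} \<subseteq> {-2<..<-1} \<times> (ball 0 1 \<times> ball 0 1)"
  and B0: "B0 \<ge> 0" "\<And>x. \<bar>\<psi> x\<bar> \<le> B0"
  and B1: "B1 \<ge> 0" "\<And>x u. \<bar>frechet_derivative \<psi> (at x) u\<bar> \<le> B1 * norm u"
  and d1: "\<And>x. (\<psi> has_derivative frechet_derivative \<psi> (at x)) (at x)"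
  and B2: "B2 \<ge> 0" "\<And>x v h. \<bar>frechet_derivative (\<lambda>x. frechet_derivative \<psi> (at x) v) (at x) h\<bar> \<le> B2 * norm v * norm h"
  and d2: "\<And>x v. ((\<lambda>x. frechet_derivative \<psi> (at x) v) has_derivative frechet_derivative (\<lambda>x. frechet_derivative \<psi> (at x) v) (at x)) (at x)"
  and z0: "\<And>x. x \<notin> closure {z. \<psi> z \<noteq> 0} \<Longrightarrow> \<psi> x = 0"
  and z1: "\<And>x u. x \<notin> closure {z. \<psi> z \<noteq> 0} \<Longrightarrow> frechet_derivative \<psi> (at x) u = 0"
  and z2: "\<And>x v h. x \<notin> closure {z. \<psi> z \<noteq> 0} \<Longrightarrow> frechet_derivative (\<lambda>x. frechet_derivative \<psi> (at x) v) (at x) h = 0"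
begin

abbreviation "SS \<equiv> closure {z. \<psi> z \<noteq> 0}"

lemma inS:
  assumes "(t, (x, v)) \<in> SS"
  shows "-2 < t" "t < -1" "norm x < 1" "norm v < 1" "1 \<le> \<bar>t\<bar>" "\<bar>t\<bar> \<le> 2"
proof -
  have "(t, (x, v)) \<in> {-2<..<-1} \<times> (ball 0 1 \<times> ball 0 1)" using assms Ssub by blast
  then show "-2 < t" "t < -1" "norm x < 1" "norm v < 1" "1 \<le> \<bar>t\<bar>" "\<bar>t\<bar> \<le> 2" by auto
qed

lemma scal_kernel:
  fixes k :: "real \<Rightarrow> real^'d \<Rightarrow> real^'d \<Rightarrow> real"
  assumes r: "r > 0"
    and kdef: "\<And>s y w. k s y w = (if s = 0 then 0 else c s * \<psi> (s/r, Mop b r s (y,w)))"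
    and cb: "\<And>s. 1 \<le> \<bar>s/r\<bar> \<Longrightarrow> \<bar>s/r\<bar> \<le> 2 \<Longrightarrow> \<bar>c s\<bar> \<le> Kc" and Kc: "Kc \<ge> 0"
  shows "\<bar>k s y w\<bar> \<le> Kc * B0" "grad_y_bound k (Kc * B1 * (2 * Kb b) * r powr (-b))"
proof -
  show "\<bar>k s y w\<bar> \<le> Kc * B0"
  proof (cases "s = 0 \<or> (s/r, Mop b r s (y,w)) \<notin> SS")
    case True
    then have "k s y w = 0"
    proof
      assume "s = 0" then show ?thesis using kdef by simp
    next
      assume "(s/r, Mop b r s (y,w)) \<notin> SS"
      then have "\<psi> (s/r, Mop b r s (y,w)) = 0" by (rule z0)
      then show ?thesis using kdef by simp
    qed
    then show ?thesis using Kc B0 by simp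
  next
    case False
    then have s0: "s \<noteq> 0" and inn: "(s/r, Mop b r s (y,w)) \<in> SS" by auto
    obtain x v where xv: "Mop b r s (y,w) = (x,v)" by (cases "Mop b r s (y,w)") simp
    have "1 \<le> \<bar>s/r\<bar>" "\<bar>s/r\<bar> \<le> 2" using inS(5,6)[OF inn[unfolded xv]] by auto
    then have "\<bar>c s\<bar> \<le> Kc" by (rule cb)
    then have "\<bar>c s\<bar> * \<bar>\<psi> (s/r, Mop b r s (y,w))\<bar> \<le> Kc * B0" using B0 Kc by (intro mult_mono) auto
    then show ?thesis using kdef s0 by (simp add: abs_mult)
  qed
  have KK: "Kb b \<ge> 1" using Kb_ge b1 by auto
  have bnd0: "0 \<le> Kc * B1 * (2 * Kb b) * r powr (-b)" using Kc B1 KK by simp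
  show "grad_y_bound k (Kc * B1 * (2 * Kb b) * r powr (-b))"
    unfolding grad_y_bound_def
  proof (intro allI)
    fix s y w
    show "\<exists>D. ((\<lambda>y'. k s y' w) has_derivative D) (at y) \<and> onorm D \<le> Kc * B1 * (2 * Kb b) * r powr (-b)"
    proof (cases "s = 0")
      case True
      then have "(\<lambda>y'. k s y' w) = (\<lambda>_. 0)" using kdef by (intro ext) simp
      then have "((\<lambda>y'. k s y' w) has_derivative (\<lambda>_. 0)) (at y)" by simp
      then show ?thesis using bnd0 by (intro exI[of _ "\<lambda>_. 0"]) (simp add: onorm_zero)
    next
      case s0: False
      let ?t = "s/r"
      let ?pt = "\<lambda>y. (?t, (P11 b r *\<^sub>R y + P12 b ?t r *\<^sub>R w, P21 b r *\<^sub>R y + P22 b ?t r *\<^sub>R w))"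
      have keq: "(\<lambda>y'. k s y' w) = (\<lambda>y. c s * \<psi> (?pt y))"
        by (intro ext) (simp add: kdef s0 Mop_eq[OF r s0])
      let ?D = "\<lambda>h. c s * frechet_derivative \<psi> (at (?pt y)) (0, (P11 b r *\<^sub>R h, P21 b r *\<^sub>R h))"
      have "((\<lambda>y. \<psi> (?pt y)) has_derivative (\<lambda>h. frechet_derivative \<psi> (at (?pt y)) (0, (P11 b r *\<^sub>R h, P21 b r *\<^sub>R h)))) (at y)"
        by (rule has_derivative_compose[OF pt_deriv d1])
      then have hd: "((\<lambda>y'. k s y' w) has_derivative ?D) (at y)"
        unfolding keq by (rule has_derivative_mult_right)
      have "onorm ?D \<le> Kc * B1 * (2 * Kb b) * r powr (-b)"
      proof (rule onorm_le)
        fix h :: "real^'d"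
        show "norm (?D h) \<le> Kc * B1 * (2 * Kb b) * r powr (-b) * norm h"
        proof (cases "?pt y \<in> SS")
          case False
          then have "frechet_derivative \<psi> (at (?pt y)) (0, (P11 b r *\<^sub>R h, P21 b r *\<^sub>R h)) = 0" by (rule z1)
          then show ?thesis using bnd0 by simp
        next
          case True
          have tb: "1 \<le> \<bar>?t\<bar>" "\<bar>?t\<bar> \<le> 2" using inS[OF True] by auto
          have "\<bar>c s\<bar> \<le> Kc" using tb by (rule cb)
          have pb: "\<bar>P11 b r\<bar> + \<bar>P21 b r\<bar> \<le> 2 * Kb b * r powr (-b)"
            using P_bounds(1,2)[OF b1 r tb(2)] by simp
          have "\<bar>frechet_derivative \<psi> (at (?pt y)) (0, (P11 b r *\<^sub>R h, P21 b r *\<^sub>R h))\<bar>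
             \<le> B1 * norm (0::real, (P11 b r *\<^sub>R h, P21 b r *\<^sub>R h))" by (rule B1(2))
          also have "\<dots> \<le> B1 * ((\<bar>P11 b r\<bar> + \<bar>P21 b r\<bar>) * norm h)"
            using B1(1) pt_norm by (rule mult_left_mono[rotated])
          also have "\<dots> \<le> B1 * ((2 * Kb b * r powr (-b)) * norm h)"
            using B1(1) pb by (intro mult_left_mono mult_right_mono) auto
          finally have fb: "\<bar>frechet_derivative \<psi> (at (?pt y)) (0, (P11 b r *\<^sub>R h, P21 b r *\<^sub>R h))\<bar>
             \<le> B1 * ((2 * Kb b * r powr (-b)) * norm h)" .
          have "norm (?D h) = \<bar>c s\<bar> * \<bar>frechet_derivative \<psi> (at (?pt y)) (0, (P11 b r *\<^sub>R h, P21 b r *\<^sub>R h))\<bar>"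
            by (simp add: abs_mult)
          also have "\<dots> \<le> Kc * (B1 * ((2 * Kb b * r powr (-b)) * norm h))"
            using \<open>\<bar>c s\<bar> \<le> Kc\<close> fb Kc by (intro mult_mono) auto
          also have "\<dots> = Kc * B1 * (2 * Kb b) * r powr (-b) * norm h" by (simp add: algebra_simps)
          finally show ?thesis .
        qed
      qed
      then show ?thesis using hd by blast
    qed
  qed
qed


lemma G0_kernel:
  assumes r: "r > 0"
    and cb: "\<And>s. 1 \<le> \<bar>s/r\<bar> \<Longrightarrow> \<bar>s/r\<bar> \<le> 2 \<Longrightarrow>
       \<bar>inverse (c0 TYPE('d)) * (s/r) ^ (CARD('d) + 1) * r powr (- Qexp TYPE('d) b)\<bar> \<le> Kc"
    and Kc: "Kc \<ge> 0"
  shows "norm (G0ker b \<psi> r s y w) \<le> Kc * (real CARD('d) * (B1 * (2 * Kb b * r powr (1-b))))"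
    "grad_y_bound (G0ker b \<psi> r) (Kc * (real CARD('d) * (B2 * (2 * Kb b * r powr (1-b)) * (2 * Kb b * r powr (-b)))))"
proof -
  define cG where "cG s = inverse (c0 TYPE('d)) * (s/r) ^ (CARD('d) + 1) * r powr (- Qexp TYPE('d) b)" for s
  have KK: "Kb b \<ge> 1" using Kb_ge b1 by auto
  have rp: "r powr (1-b) > 0" "r powr (-b) > 0" using r by auto
  define uj where "uj s j = (P12 b (s/r) r *\<^sub>R axis j (1::real), P22 b (s/r) r *\<^sub>R (axis j 1 :: real^'d))" for s j
  define pt where "pt s (y'::real^'d) (w'::real^'d) = (s/r, (P11 b r *\<^sub>R y' + P12 b (s/r) r *\<^sub>R w', P21 b r *\<^sub>R y' + P22 b (s/r) r *\<^sub>R w'))" for s y' w'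
  have Geq: "G0ker b \<psi> r s y' w' = cG s *\<^sub>R (\<Sum>j\<in>UNIV. frechet_derivative \<psi> (at (pt s y' w')) (0, uj s j) *\<^sub>R axis j (1::real))"
    if "s \<noteq> 0" for s y' w'
  proof -
    have "\<And>j. frechet_derivative (\<lambda>q. \<psi> (s/r, q)) (at (Mop b r s (y', w'))) (Mop b r s (0, axis j 1))
        = frechet_derivative \<psi> (at (pt s y' w')) (0, uj s j)"
      unfolding partial_fd[OF d1] by (simp add: Mop_eq[OF r that] pt_def uj_def)
    then show ?thesis unfolding G0ker_def cG_def using that by (simp add: vec_sum_axis)
  qed
  have ujn: "norm (0::real, uj s j) \<le> 2 * Kb b * r powr (1-b)" if "\<bar>s/r\<bar> \<le> 2" for s j
  proof -
    have "norm (0::real, uj s j) \<le> (\<bar>P12 b (s/r) r\<bar> + \<bar>P22 b (s/r) r\<bar>) * norm (axis j (1::real) :: real^'d)"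
      unfolding uj_def by (rule pt_norm)
    also have "\<dots> \<le> 2 * Kb b * r powr (1-b)" using P_bounds(3,4)[OF b1 r that] by simp
    finally show ?thesis .
  qed
  show "norm (G0ker b \<psi> r s y w) \<le> Kc * (real CARD('d) * (B1 * (2 * Kb b * r powr (1-b))))"
  proof (cases "s = 0 \<or> pt s y w \<notin> SS")
    case True
    then have "G0ker b \<psi> r s y w = 0"
    proof
      assume "s = 0" then show ?thesis by (simp add: G0ker_def)
    next
      assume ns: "pt s y w \<notin> SS"
      show ?thesis
      proof (cases "s = 0")
        case True then show ?thesis by (simp add: G0ker_def)
      next
        case False
        have "\<And>j. frechet_derivative \<psi> (at (pt s y w)) (0, uj s j) = 0" using ns by (rule z1)
        then show ?thesis using Geq[OF False] by simp
      qed
    qed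
    then show ?thesis using Kc B1 KK rp by simp
  next
    case False
    then have s0: "s \<noteq> 0" and inn: "pt s y w \<in> SS" by auto
    have tb: "1 \<le> \<bar>s/r\<bar>" "\<bar>s/r\<bar> \<le> 2" using inS(5,6)[OF inn[unfolded pt_def]] by auto
    have "norm (G0ker b \<psi> r s y w) = \<bar>cG s\<bar> * norm (\<Sum>j\<in>UNIV. frechet_derivative \<psi> (at (pt s y w)) (0, uj s j) *\<^sub>R axis j (1::real))"
      unfolding Geq[OF s0] by simp
    also have "\<dots> \<le> Kc * (\<Sum>j\<in>(UNIV::'d set). B1 * (2 * Kb b * r powr (1-b)))"
    proof (rule mult_mono)
      show "\<bar>cG s\<bar> \<le> Kc" unfolding cG_def using tb by (rule cb)
      have "norm (\<Sum>j\<in>UNIV. frechet_derivative \<psi> (at (pt s y w)) (0, uj s j) *\<^sub>R axis j (1::real))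
          \<le> (\<Sum>j\<in>(UNIV::'d set). \<bar>frechet_derivative \<psi> (at (pt s y w)) (0, uj s j)\<bar>)" by (rule norm_sum_axis)
      also have "\<dots> \<le> (\<Sum>j\<in>(UNIV::'d set). B1 * (2 * Kb b * r powr (1-b)))"
      proof (rule sum_mono)
        fix j :: 'd
        have "\<bar>frechet_derivative \<psi> (at (pt s y w)) (0, uj s j)\<bar> \<le> B1 * norm (0::real, uj s j)" by (rule B1(2))
        also have "\<dots> \<le> B1 * (2 * Kb b * r powr (1-b))" using ujn[OF tb(2)] B1(1) by (rule mult_left_mono)
        finally show "\<bar>frechet_derivative \<psi> (at (pt s y w)) (0, uj s j)\<bar> \<le> B1 * (2 * Kb b * r powr (1-b))" .
      qed
      finally show "norm (\<Sum>j\<in>UNIV. frechet_derivative \<psi> (at (pt s y w)) (0, uj s j) *\<^sub>R axis j (1::real))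
          \<le> (\<Sum>j\<in>(UNIV::'d set). B1 * (2 * Kb b * r powr (1-b)))" .
    qed (use Kc in auto)
    also have "\<dots> = Kc * (real CARD('d) * (B1 * (2 * Kb b * r powr (1-b))))" by simp
    finally show ?thesis .
  qed
  have bnd0: "0 \<le> Kc * (real CARD('d) * (B2 * (2 * Kb b * r powr (1-b)) * (2 * Kb b * r powr (-b))))"
    using Kc B2 KK rp by simp
  show "grad_y_bound (G0ker b \<psi> r) (Kc * (real CARD('d) * (B2 * (2 * Kb b * r powr (1-b)) * (2 * Kb b * r powr (-b)))))"
    unfolding grad_y_bound_def
  proof (intro allI)
    fix s y w
    show "\<exists>D. ((\<lambda>y'. G0ker b \<psi> r s y' w) has_derivative D) (at y) \<and> onorm D \<le> Kc * (real CARD('d) * (B2 * (2 * Kb b * r powr (1-b)) * (2 * Kb b * r powr (-b))))"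
    proof (cases "s = 0")
      case True
      then have "(\<lambda>y'. G0ker b \<psi> r s y' w) = (\<lambda>_. 0)" by (intro ext) (simp add: G0ker_def)
      then have "((\<lambda>y'. G0ker b \<psi> r s y' w) has_derivative (\<lambda>_. 0)) (at y)" by simp
      then show ?thesis using bnd0 by (intro exI[of _ "\<lambda>_. 0"]) (simp add: onorm_zero)
    next
      case s0: False
      let ?g = "\<lambda>j x. frechet_derivative \<psi> (at x) (0, uj s j)"
      let ?D2 = "\<lambda>j h. frechet_derivative (?g j) (at (pt s y w)) (0, (P11 b r *\<^sub>R h, P21 b r *\<^sub>R h))"
      let ?D = "\<lambda>h. cG s *\<^sub>R (\<Sum>j\<in>UNIV. ?D2 j h *\<^sub>R axis j (1::real))"
      have keq: "(\<lambda>y'. G0ker b \<psi> r s y' w) = (\<lambda>y'. cG s *\<^sub>R (\<Sum>j\<in>UNIV. ?g j (pt s y' w) *\<^sub>R axis j (1::real)))"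
        by (intro ext) (simp add: Geq[OF s0])
      have hj: "((\<lambda>y'. ?g j (pt s y' w)) has_derivative ?D2 j) (at y)" for j
        unfolding pt_def by (rule has_derivative_compose[OF pt_deriv d2])
      have hd: "((\<lambda>y'. G0ker b \<psi> r s y' w) has_derivative ?D) (at y)"
        unfolding keq by (intro has_derivative_scaleR_right has_derivative_sum has_derivative_scaleR_left hj)
      have "onorm ?D \<le> Kc * (real CARD('d) * (B2 * (2 * Kb b * r powr (1-b)) * (2 * Kb b * r powr (-b))))"
      proof (rule onorm_le)
        fix h :: "real^'d"
        show "norm (?D h) \<le> Kc * (real CARD('d) * (B2 * (2 * Kb b * r powr (1-b)) * (2 * Kb b * r powr (-b)))) * norm h"
        proof (cases "pt s y w \<in> SS")
          case False
          then have "\<And>j. ?D2 j h = 0" by (rule z2)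
          then show ?thesis using bnd0 by simp
        next
          case True
          have tb: "1 \<le> \<bar>s/r\<bar>" "\<bar>s/r\<bar> \<le> 2" using inS(5,6)[OF True[unfolded pt_def]] by auto
          have pb: "\<bar>P11 b r\<bar> + \<bar>P21 b r\<bar> \<le> 2 * Kb b * r powr (-b)"
            using P_bounds(1,2)[OF b1 r tb(2)] by simp
          have Lh: "norm (0::real, (P11 b r *\<^sub>R h, P21 b r *\<^sub>R h)) \<le> (2 * Kb b * r powr (-b)) * norm h"
            using pt_norm[of "P11 b r" h "P21 b r"] pb by (meson mult_right_mono norm_ge_zero order_trans)
          have dj: "\<bar>?D2 j h\<bar> \<le> B2 * (2 * Kb b * r powr (1-b)) * (2 * Kb b * r powr (-b)) * norm h" for j
          proof -
            have "\<bar>?D2 j h\<bar> \<le> B2 * norm (0::real, uj s j) * norm (0::real, (P11 b r *\<^sub>R h, P21 b r *\<^sub>R h))"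
              by (rule B2(2))
            also have "\<dots> \<le> B2 * (2 * Kb b * r powr (1-b)) * ((2 * Kb b * r powr (-b)) * norm h)"
              using B2(1) ujn[OF tb(2)] Lh KK rp by (intro mult_mono mult_left_mono) auto
            finally show ?thesis by (simp add: mult.assoc)
          qed
          have "norm (?D h) = \<bar>cG s\<bar> * norm (\<Sum>j\<in>UNIV. ?D2 j h *\<^sub>R axis j (1::real))" by simp
          also have "\<dots> \<le> Kc * (\<Sum>j\<in>(UNIV::'d set). B2 * (2 * Kb b * r powr (1-b)) * (2 * Kb b * r powr (-b)) * norm h)"
          proof (rule mult_mono)
            show "\<bar>cG s\<bar> \<le> Kc" unfolding cG_def using tb by (rule cb)
            show "norm (\<Sum>j\<in>UNIV. ?D2 j h *\<^sub>R axis j (1::real))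
               \<le> (\<Sum>j\<in>(UNIV::'d set). B2 * (2 * Kb b * r powr (1-b)) * (2 * Kb b * r powr (-b)) * norm h)"
              using norm_sum_axis[of "\<lambda>j. ?D2 j h"] sum_mono[of UNIV "\<lambda>j. \<bar>?D2 j h\<bar>", OF dj]
              by linarith
          qed (use Kc in auto)
          also have "\<dots> = Kc * (real CARD('d) * (B2 * (2 * Kb b * r powr (1-b)) * (2 * Kb b * r powr (-b)))) * norm h"
            by simp
          finally show ?thesis .
        qed
      qed
      then show ?thesis using hd by blast
    qed
  qed
qed


lemma Gv_kernel:
  assumes r: "r > 0"
    and cb: "\<And>s. 1 \<le> \<bar>s/r\<bar> \<Longrightarrow> \<bar>s/r\<bar> \<le> 2 \<Longrightarrow>
       \<bar>- inverse (c0 TYPE('d)) * (s/r) ^ CARD('d) * r powr (- Qexp TYPE('d) b)\<bar> \<le> Kc"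
    and Kc: "Kc \<ge> 0"
  shows "norm (Gvker b \<psi> r s y w) \<le> Kc * (B0 * (2 * Kb b * r powr (b-2)))"
    "grad_y_bound (Gvker b \<psi> r) (Kc * (B0 * (Kb b * r powr (b-2)) * (2 * Kb b * r powr (-b))
        + B1 * (2 * Kb b * r powr (-b)) * (2 * Kb b * r powr (b-2))))"
proof -
  define cV where "cV s = - inverse (c0 TYPE('d)) * (s/r) ^ CARD('d) * r powr (- Qexp TYPE('d) b)" for s
  define a1 where "a1 s = inverse (s/r) * deriv (deriv (g1 b)) r" for s
  define a2 where "a2 s = inverse (s/r) * deriv (deriv (g2 b)) r" for s
  have KK: "Kb b \<ge> 1" using Kb_ge b1 by auto
  have rp: "r powr (b-2) > 0" "r powr (-b) > 0" using r by auto
  define pt where "pt s (y'::real^'d) (w'::real^'d) = (s/r, (P11 b r *\<^sub>R y' + P12 b (s/r) r *\<^sub>R w', P21 b r *\<^sub>R y' + P22 b (s/r) r *\<^sub>R w'))" for s y' w'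
  define gF where "gF s (y'::real^'d) (w'::real^'d) = a1 s *\<^sub>R (P11 b r *\<^sub>R y' + P12 b (s/r) r *\<^sub>R w') + a2 s *\<^sub>R (P21 b r *\<^sub>R y' + P22 b (s/r) r *\<^sub>R w')" for s y' w'
  have Geq: "Gvker b \<psi> r s y' w' = (cV s * \<psi> (pt s y' w')) *\<^sub>R gF s y' w'" if "s \<noteq> 0" for s y' w'
    unfolding Gvker_def cV_def pt_def gF_def a1_def a2_def Fop_def using that by (simp add: Mop_eq[OF r that])
  have gFb: "norm (gF s y' w') \<le> 2 * Kb b * r powr (b-2)" if "pt s y' w' \<in> SS" for s y' w'
  proof -
    have i: "-2 < s/r" "s/r < -1" "norm (P11 b r *\<^sub>R y' + P12 b (s/r) r *\<^sub>R w') < 1" "norm (P21 b r *\<^sub>R y' + P22 b (s/r) r *\<^sub>R w') < 1"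
      using inS[OF that[unfolded pt_def]] by auto
    have t1: "1 \<le> \<bar>s/r\<bar>" using inS(5)[OF that[unfolded pt_def]] .
    have "norm (gF s y' w') \<le> \<bar>a1 s\<bar> * norm (P11 b r *\<^sub>R y' + P12 b (s/r) r *\<^sub>R w') + \<bar>a2 s\<bar> * norm (P21 b r *\<^sub>R y' + P22 b (s/r) r *\<^sub>R w')"
      unfolding gF_def using norm_triangle_ineq by (metis norm_scaleR)
    also have "\<dots> \<le> Kb b * r powr (b-2) * 1 + Kb b * r powr (b-2) * 1"
      using F_bound[OF b1 r t1] i KK rp by (intro add_mono mult_mono) (auto simp: a1_def a2_def)
    finally show ?thesis by simp
  qed
  show "norm (Gvker b \<psi> r s y w) \<le> Kc * (B0 * (2 * Kb b * r powr (b-2)))"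
  proof (cases "s = 0 \<or> pt s y w \<notin> SS")
    case True
    then have "Gvker b \<psi> r s y w = 0"
    proof
      assume "s = 0" then show ?thesis by (simp add: Gvker_def)
    next
      assume ns: "pt s y w \<notin> SS"
      show ?thesis
      proof (cases "s = 0")
        case True then show ?thesis by (simp add: Gvker_def)
      next
        case False
        have "\<psi> (pt s y w) = 0" using ns by (rule z0)
        then show ?thesis using Geq[OF False] by simp
      qed
    qed
    then show ?thesis using Kc B0 KK rp by simp
  next
    case False
    then have s0: "s \<noteq> 0" and inn: "pt s y w \<in> SS" by auto
    have tb: "1 \<le> \<bar>s/r\<bar>" "\<bar>s/r\<bar> \<le> 2" using inS(5,6)[OF inn[unfolded pt_def]] by auto
    have "norm (Gvker b \<psi> r s y w) = (\<bar>cV s\<bar> * \<bar>\<psi> (pt s y w)\<bar>) * norm (gF s y w)"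
      unfolding Geq[OF s0] by (simp add: abs_mult)
    also have "\<dots> \<le> (Kc * B0) * (2 * Kb b * r powr (b-2))"
    proof (intro mult_mono)
      show "\<bar>cV s\<bar> \<le> Kc" unfolding cV_def using tb by (rule cb)
    qed (use B0 Kc gFb[OF inn] in auto)
    finally show ?thesis by (simp add: mult.assoc)
  qed
  define BB where "BB = Kc * (B0 * (Kb b * r powr (b-2)) * (2 * Kb b * r powr (-b))
        + B1 * (2 * Kb b * r powr (-b)) * (2 * Kb b * r powr (b-2)))"
  have bnd0: "0 \<le> BB" unfolding BB_def using Kc B0 B1 KK rp by simp
  show "grad_y_bound (Gvker b \<psi> r) (Kc * (B0 * (Kb b * r powr (b-2)) * (2 * Kb b * r powr (-b))
        + B1 * (2 * Kb b * r powr (-b)) * (2 * Kb b * r powr (b-2))))"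
    unfolding grad_y_bound_def BB_def[symmetric]
  proof (intro allI)
    fix s y w
    show "\<exists>D. ((\<lambda>y'. Gvker b \<psi> r s y' w) has_derivative D) (at y) \<and> onorm D \<le> BB"
    proof (cases "s = 0")
      case True
      then have "(\<lambda>y'. Gvker b \<psi> r s y' w) = (\<lambda>_. 0)" by (intro ext) (simp add: Gvker_def)
      then have "((\<lambda>y'. Gvker b \<psi> r s y' w) has_derivative (\<lambda>_. 0)) (at y)" by simp
      then show ?thesis using bnd0 by (intro exI[of _ "\<lambda>_. 0"]) (simp add: onorm_zero)
    next
      case s0: False
      let ?L = "\<lambda>h::real^'d. (0::real, (P11 b r *\<^sub>R h, P21 b r *\<^sub>R h))"
      let ?g' = "\<lambda>h::real^'d. a1 s *\<^sub>R (P11 b r *\<^sub>R h) + a2 s *\<^sub>R (P21 b r *\<^sub>R h)"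
      let ?f' = "\<lambda>h. cV s * frechet_derivative \<psi> (at (pt s y w)) (?L h)"
      let ?D = "\<lambda>h. (cV s * \<psi> (pt s y w)) *\<^sub>R ?g' h + ?f' h *\<^sub>R gF s y w"
      have keq: "(\<lambda>y'. Gvker b \<psi> r s y' w) = (\<lambda>y'. (cV s * \<psi> (pt s y' w)) *\<^sub>R gF s y' w)"
        by (intro ext) (simp add: Geq[OF s0])
      have hf: "((\<lambda>y'. cV s * \<psi> (pt s y' w)) has_derivative ?f') (at y)"
        unfolding pt_def by (intro has_derivative_mult_right has_derivative_compose[OF pt_deriv d1])
      have hg: "((\<lambda>y'. gF s y' w) has_derivative ?g') (at y)"
        unfolding gF_def by (auto intro!: derivative_eq_intros)
      have hd: "((\<lambda>y'. Gvker b \<psi> r s y' w) has_derivative ?D) (at y)"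
        unfolding keq using has_derivative_scaleR[OF hf hg] by simp
      have "onorm ?D \<le> BB"
      proof (rule onorm_le)
        fix h :: "real^'d"
        show "norm (?D h) \<le> BB * norm h"
        proof (cases "pt s y w \<in> SS")
          case False
          then have "\<psi> (pt s y w) = 0" by (rule z0)
          moreover have "frechet_derivative \<psi> (at (pt s y w)) (?L h) = 0" using False by (rule z1)
          ultimately show ?thesis using bnd0 by simp
        next
          case True
          have tb: "1 \<le> \<bar>s/r\<bar>" "\<bar>s/r\<bar> \<le> 2" using inS(5,6)[OF True[unfolded pt_def]] by auto
          have cV: "\<bar>cV s\<bar> \<le> Kc" unfolding cV_def using tb by (rule cb)
          have pb: "\<bar>P11 b r\<bar> + \<bar>P21 b r\<bar> \<le> 2 * Kb b * r powr (-b)"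
            using P_bounds(1,2)[OF b1 r tb(2)] by simp
          have ab: "\<bar>a1 s\<bar> \<le> Kb b * r powr (b-2)" "\<bar>a2 s\<bar> \<le> Kb b * r powr (b-2)"
            using F_bound[OF b1 r tb(1)] by (auto simp: a1_def a2_def)
          have Lh: "norm (?L h) \<le> (2 * Kb b * r powr (-b)) * norm h"
            using pt_norm[of "P11 b r" h "P21 b r"] pb by (meson mult_right_mono norm_ge_zero order_trans)
          have "norm (?g' h) \<le> \<bar>a1 s\<bar> * (\<bar>P11 b r\<bar> * norm h) + \<bar>a2 s\<bar> * (\<bar>P21 b r\<bar> * norm h)"
            using norm_triangle_ineq by (metis norm_scaleR)
          also have "\<dots> \<le> (Kb b * r powr (b-2)) * (\<bar>P11 b r\<bar> * norm h) + (Kb b * r powr (b-2)) * (\<bar>P21 b r\<bar> * norm h)"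
            using ab by (intro add_mono mult_right_mono) auto
          also have "\<dots> = (Kb b * r powr (b-2)) * ((\<bar>P11 b r\<bar> + \<bar>P21 b r\<bar>) * norm h)" by (simp add: algebra_simps)
          also have "\<dots> \<le> (Kb b * r powr (b-2)) * ((2 * Kb b * r powr (-b)) * norm h)"
            using pb KK rp by (intro mult_left_mono mult_right_mono) auto
          finally have gb: "norm (?g' h) \<le> (Kb b * r powr (b-2)) * ((2 * Kb b * r powr (-b)) * norm h)" .
          have t1: "norm ((cV s * \<psi> (pt s y w)) *\<^sub>R ?g' h) \<le> (Kc * B0) * ((Kb b * r powr (b-2)) * ((2 * Kb b * r powr (-b)) * norm h))"
            unfolding norm_scaleR abs_mult using cV B0 gb Kc by (intro mult_mono) auto
          have fb: "\<bar>?f' h\<bar> \<le> Kc * (B1 * ((2 * Kb b * r powr (-b)) * norm h))"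
          proof -
            have "\<bar>frechet_derivative \<psi> (at (pt s y w)) (?L h)\<bar> \<le> B1 * norm (?L h)" by (rule B1(2))
            also have "\<dots> \<le> B1 * ((2 * Kb b * r powr (-b)) * norm h)" using B1(1) Lh by (rule mult_left_mono[rotated])
            finally show ?thesis unfolding abs_mult using cV Kc by (intro mult_mono) auto
          qed
          have t2: "norm (?f' h *\<^sub>R gF s y w) \<le> (Kc * (B1 * ((2 * Kb b * r powr (-b)) * norm h))) * (2 * Kb b * r powr (b-2))"
            unfolding norm_scaleR using fb gFb[OF True] Kc B1 KK rp by (intro mult_mono) auto
          have "norm (?D h) \<le> norm ((cV s * \<psi> (pt s y w)) *\<^sub>R ?g' h) + norm (?f' h *\<^sub>R gF s y w)"
            by (rule norm_triangle_ineq)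
          also have "\<dots> \<le> (Kc * B0) * ((Kb b * r powr (b-2)) * ((2 * Kb b * r powr (-b)) * norm h))
              + (Kc * (B1 * ((2 * Kb b * r powr (-b)) * norm h))) * (2 * Kb b * r powr (b-2))"
            using t1 t2 by (rule add_mono)
          also have "\<dots> = BB * norm h" unfolding BB_def by (simp add: algebra_simps)
          finally show ?thesis .
        qed
      qed
      then show ?thesis using hd by blast
    qed
  qed
qed


lemma c0_abs2: "\<bar>c0 TYPE('d)\<bar> = 1"
  by (simp add: c0_def power_abs)

lemma c0_abs: "\<bar>inverse (c0 TYPE('d))\<bar> = 1"
  by (simp add: abs_inverse c0_abs2)

lemma coef_bound:
  assumes "\<bar>t\<bar> \<le> 2" "R \<ge> 0"
  shows "\<bar>inverse (c0 TYPE('d)) * R * t ^ n\<bar> \<le> 2 ^ n * R"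
    "\<bar>inverse (c0 TYPE('d)) * t ^ n * R\<bar> \<le> 2 ^ n * R"
    "\<bar>- inverse (c0 TYPE('d)) * t ^ n * R\<bar> \<le> 2 ^ n * R"
proof -
  have "\<bar>t\<bar> ^ n \<le> 2 ^ n" using assms(1) by (intro power_mono) auto
  then have "\<bar>t\<bar> ^ n * R \<le> 2 ^ n * R" using assms(2) by (rule mult_right_mono)
  then show "\<bar>inverse (c0 TYPE('d)) * R * t ^ n\<bar> \<le> 2 ^ n * R"
    "\<bar>inverse (c0 TYPE('d)) * t ^ n * R\<bar> \<le> 2 ^ n * R"
    "\<bar>- inverse (c0 TYPE('d)) * t ^ n * R\<bar> \<le> 2 ^ n * R"
    using assms(2) by (simp_all add: abs_mult c0_abs c0_abs2 power_abs algebra_simps)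
qed

lemma supp_main:
  assumes r: "r > 0" and s0: "s \<noteq> 0" and inn: "(s/r, Mop b r s (y,w)) \<in> SS"
  shows "-2*r \<le> s \<and> s \<le> -r \<and> norm y \<le> Kb b * r powr b \<and> norm w \<le> Kb b * r powr (b - 1)"
proof -
  obtain x v where xv: "Mop b r s (y,w) = (x,v)" by (cases "Mop b r s (y,w)") simp
  note i = inS[OF inn[unfolded xv]]
  have "-2 * r < s" using i(1) r by (simp add: less_divide_eq)
  moreover have "s < -r" using i(2) r by (simp add: divide_less_eq)
  moreover have "norm y \<le> Kb b * r powr b" "norm w \<le> Kb b * r powr (b - 1)"
    using supp_bound[OF b1 r s0 i(5) xv] i(3,4) by auto
  ultimately show ?thesis by auto
qed

lemma nz_in:
  assumes r: "r > 0"
  shows "Kker b \<psi> r s y w \<noteq> 0 \<or> G0ker b \<psi> r s y w \<noteq> 0 \<or> G1ker b \<psi> r s y w \<noteq> 0 \<or> Gvker b \<psi> r s y w \<noteq> 0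
     \<Longrightarrow> s \<noteq> 0 \<and> (s/r, Mop b r s (y,w)) \<in> SS"
proof (rule ccontr)
  assume nz: "Kker b \<psi> r s y w \<noteq> 0 \<or> G0ker b \<psi> r s y w \<noteq> 0 \<or> G1ker b \<psi> r s y w \<noteq> 0 \<or> Gvker b \<psi> r s y w \<noteq> 0"
    and c: "\<not> (s \<noteq> 0 \<and> (s/r, Mop b r s (y,w)) \<in> SS)"
  show False
  proof (cases "s = 0")
    case True
    then show False using nz by (simp add: Kker_def G0ker_def G1ker_def Gvker_def)
  next
    case False
    then have ns: "(s/r, Mop b r s (y,w)) \<notin> SS" using c by simp
    have p0: "\<psi> (s/r, Mop b r s (y,w)) = 0" using ns by (rule z0)
    have "\<And>u. frechet_derivative (\<lambda>q. \<psi> (s/r, q)) (at (Mop b r s (y,w))) u = 0"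
      unfolding partial_fd[OF d1] using ns by (rule z1)
    then have "G0ker b \<psi> r s y w = 0" by (simp add: G0ker_def vec_eq_iff)
    then show False using nz p0 False by (simp add: Kker_def G1ker_def Gvker_def)
  qed
qed

lemma T_closed: "closed {(s, y, w). -2*r \<le> s \<and> s \<le> -r \<and> norm (y::real^'d) \<le> C * r powr b \<and> norm (w::real^'d) \<le> C * r powr (b - 1)}"
proof -
  have "{(s, y, w). -2*r \<le> s \<and> s \<le> -r \<and> norm (y::real^'d) \<le> C * r powr b \<and> norm (w::real^'d) \<le> C * r powr (b - 1)}
     = {z. -2*r \<le> fst z \<and> fst z \<le> -r \<and> norm (fst (snd z)) \<le> C * r powr b \<and> norm (snd (snd z)) \<le> C * r powr (b - 1)}"
    by auto
  moreover have "closed {z::real \<times> (real^'d) \<times> (real^'d). -2*r \<le> fst z \<and> fst z \<le> -r \<and> norm (fst (snd z)) \<le> C * r powr b \<and> norm (snd (snd z)) \<le> C * r powr (b - 1)}"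
    by (intro closed_Collect_conj closed_Collect_le continuous_intros)
  ultimately show ?thesis by simp
qed


lemma main:
  "\<exists>C>0. \<forall>r>0.
      ksupp (Kker b \<psi> r) \<union> ksupp (G0ker b \<psi> r) \<union> ksupp (G1ker b \<psi> r) \<union> ksupp (Gvker b \<psi> r)
        \<subseteq> {(s, y, w). -2*r \<le> s \<and> s \<le> -r \<and> norm y \<le> C * r powr b \<and> norm w \<le> C * r powr (b - 1)}
    \<and> (\<forall>s y w. \<bar>Kker b \<psi> r s y w\<bar> \<le> C * r powr (- Qexp TYPE('d) b))
    \<and> grad_y_bound (Kker b \<psi> r) (C * r powr (- b - Qexp TYPE('d) b))
    \<and> (\<forall>s y w. norm (G0ker b \<psi> r s y w) \<le> C * r powr (1 - b - Qexp TYPE('d) b))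
    \<and> grad_y_bound (G0ker b \<psi> r) (C * r powr (1 - 2*b - Qexp TYPE('d) b))
    \<and> (\<forall>s y w. \<bar>G1ker b \<psi> r s y w\<bar> \<le> C * r powr (- Qexp TYPE('d) b))
    \<and> grad_y_bound (G1ker b \<psi> r) (C * r powr (- b - Qexp TYPE('d) b))
    \<and> (\<forall>s y w. norm (Gvker b \<psi> r s y w) \<le> C * r powr (b - 2 - Qexp TYPE('d) b))
    \<and> grad_y_bound (Gvker b \<psi> r) (C * r powr (- 2 - Qexp TYPE('d) b))"
proof -
  define n where "n = CARD('d)"
  define d where "d = real CARD('d)"
  define K where "K = Kb b"
  define Q where "Q = Qexp TYPE('d) b"
  have KK: "K \<ge> 1" unfolding K_def using Kb_ge b1 by auto
  have d0: "d \<ge> 0" unfolding d_def by simp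
  define c2 where "c2 = (2::real)^n * B0"
  define c3 where "c3 = (2::real)^n * B1 * (2*K)"
  define c4 where "c4 = (2::real)^(n+1) * (d * (B1 * (2*K)))"
  define c5 where "c5 = (2::real)^(n+1) * (d * (B2 * (2*K) * (2*K)))"
  define c6 where "c6 = (2::real)^(n+1) * B0"
  define c7 where "c7 = (2::real)^(n+1) * B1 * (2*K)"
  define c8 where "c8 = (2::real)^n * (B0 * (2*K))"
  define c9 where "c9 = (2::real)^n * (B0 * K * (2*K) + B1 * (2*K) * (2*K))"
  define C where "C = max K (max c2 (max c3 (max c4 (max c5 (max c6 (max c7 (max c8 c9)))))))"
  have Cge: "K \<le> C" "c2 \<le> C" "c3 \<le> C" "c4 \<le> C" "c5 \<le> C" "c6 \<le> C" "c7 \<le> C" "c8 \<le> C" "c9 \<le> C"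
    unfolding C_def by (simp_all only: max.cobounded1 max.coboundedI2)
  have C0: "C > 0" using Cge(1) KK by linarith
  have per_r: "ksupp (Kker b \<psi> r) \<union> ksupp (G0ker b \<psi> r) \<union> ksupp (G1ker b \<psi> r) \<union> ksupp (Gvker b \<psi> r)
        \<subseteq> {(s, y, w). -2*r \<le> s \<and> s \<le> -r \<and> norm y \<le> C * r powr b \<and> norm w \<le> C * r powr (b - 1)}
    \<and> (\<forall>s y w. \<bar>Kker b \<psi> r s y w\<bar> \<le> C * r powr (- Q))
    \<and> grad_y_bound (Kker b \<psi> r) (C * r powr (- b - Q))
    \<and> (\<forall>s y w. norm (G0ker b \<psi> r s y w) \<le> C * r powr (1 - b - Q))
    \<and> grad_y_bound (G0ker b \<psi> r) (C * r powr (1 - 2*b - Q))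
    \<and> (\<forall>s y w. \<bar>G1ker b \<psi> r s y w\<bar> \<le> C * r powr (- Q))
    \<and> grad_y_bound (G1ker b \<psi> r) (C * r powr (- b - Q))
    \<and> (\<forall>s y w. norm (Gvker b \<psi> r s y w) \<le> C * r powr (b - 2 - Q))
    \<and> grad_y_bound (Gvker b \<psi> r) (C * r powr (- 2 - Q))" if r: "r > 0" for r
  proof -
    define R where "R = r powr (- Q)"
    have R0: "R \<ge> 0" unfolding R_def by simp
    have e1: "R * r powr (-b) = r powr (- b - Q)" unfolding R_def by (rule pw1) simp
    have e2: "R * r powr (1-b) = r powr (1 - b - Q)" unfolding R_def by (rule pw1) simp
    have e3: "R * (r powr (1-b) * r powr (-b)) = r powr (1 - 2*b - Q)" unfolding R_def by (rule pw2) simp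
    have e4: "R * r powr (b-2) = r powr (b - 2 - Q)" unfolding R_def by (rule pw1) simp
    have e5: "R * (r powr (b-2) * r powr (-b)) = r powr (- 2 - Q)" unfolding R_def by (rule pw2) simp
    have tpos: "\<And>x. r powr x \<ge> 0" by simp
    
    let ?T = "{(s, y, w). -2*r \<le> s \<and> s \<le> -r \<and> norm (y::real^'d) \<le> C * r powr b \<and> norm (w::real^'d) \<le> C * r powr (b - 1)}"
    have sub: "{(s, y, w). k s y w \<noteq> 0} \<subseteq> ?T"
      if kz: "\<And>s y w. k s y w \<noteq> 0 \<Longrightarrow> s \<noteq> 0 \<and> (s/r, Mop b r s (y,w)) \<in> SS" for k :: "real \<Rightarrow> real^'d \<Rightarrow> real^'d \<Rightarrow> 'z::zero"
    proof (clarify)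
      fix s y w assume "k s y w \<noteq> 0"
      then have "s \<noteq> 0" "(s/r, Mop b r s (y,w)) \<in> SS" using kz by auto
      from supp_main[OF r this]
      have h: "-2*r \<le> s" "s \<le> -r" "norm y \<le> K * r powr b" "norm w \<le> K * r powr (b - 1)" unfolding K_def by auto
      have "K * r powr b \<le> C * r powr b" "K * r powr (b-1) \<le> C * r powr (b-1)"
        using Cge(1) by (intro mult_right_mono; simp)+
      then show "-2*r \<le> s \<and> s \<le> -r \<and> norm y \<le> C * r powr b \<and> norm w \<le> C * r powr (b - 1)"
        using h by linarith
    qed
    have ks: "ksupp k \<subseteq> ?T"
      if kz: "\<And>s y w. k s y w \<noteq> 0 \<Longrightarrow> s \<noteq> 0 \<and> (s/r, Mop b r s (y,w)) \<in> SS" for k :: "real \<Rightarrow> real^'d \<Rightarrow> real^'d \<Rightarrow> 'z::zero"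
      unfolding ksupp_def by (rule closure_minimal[OF sub[OF kz] T_closed])
    have S1: "ksupp (Kker b \<psi> r) \<subseteq> ?T" by (rule ks) (rule nz_in[OF r], rule disjI1)
    have S2: "ksupp (G0ker b \<psi> r) \<subseteq> ?T" by (rule ks) (rule nz_in[OF r], rule disjI2, rule disjI1)
    have S3: "ksupp (G1ker b \<psi> r) \<subseteq> ?T" by (rule ks) (rule nz_in[OF r], rule disjI2, rule disjI2, rule disjI1)
    have S4: "ksupp (Gvker b \<psi> r) \<subseteq> ?T" by (rule ks) (rule nz_in[OF r], rule disjI2, rule disjI2, rule disjI2)
    
    have cK: "\<bar>inverse (c0 TYPE('d)) * R * (s/r) ^ n\<bar> \<le> 2^n * R" if "1 \<le> \<bar>s/r\<bar>" "\<bar>s/r\<bar> \<le> 2" for s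
      using coef_bound(1)[OF that(2) R0] .
    have kK: "Kker b \<psi> r s y w = (if s = 0 then 0 else (inverse (c0 TYPE('d)) * R * (s/r) ^ n) * \<psi> (s/r, Mop b r s (y,w)))" for s y w
      unfolding Kker_def R_def n_def Q_def ..
    have Kc0: "0 \<le> (2::real)^n * R" using R0 by simp
    have SK1: "\<bar>Kker b \<psi> r s y w\<bar> \<le> 2^n * R * B0" for s y w
      by (rule scal_kernel(1)[OF r kK _ Kc0], rule cK, assumption+)
    have SK2: "grad_y_bound (Kker b \<psi> r) (2^n * R * B1 * (2 * Kb b) * r powr (-b))"
      by (rule scal_kernel(2)[OF r kK _ Kc0], rule cK, assumption+)
    have K1: "\<forall>s y w. \<bar>Kker b \<psi> r s y w\<bar> \<le> C * r powr (- Q)"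
    proof (intro allI)
      fix s y w
      have "\<bar>Kker b \<psi> r s y w\<bar> \<le> 2^n * R * B0" by (rule SK1)
      also have "\<dots> \<le> C * r powr (- Q)" by (rule mono_bound[where c=c2, OF _ Cge(2)]) (auto simp: c2_def R_def)
      finally show "\<bar>Kker b \<psi> r s y w\<bar> \<le> C * r powr (- Q)" .
    qed
    have K2: "grad_y_bound (Kker b \<psi> r) (C * r powr (- b - Q))"
      apply (rule grad_mono[OF SK2])
      unfolding e1[symmetric] by (rule mono_bound[where c=c3, OF _ Cge(3)]) (auto simp: c3_def K_def algebra_simps R0)
    
    have Kc1: "0 \<le> (2::real)^(n+1) * R" using R0 by simp
    have cG0: "\<bar>inverse (c0 TYPE('d)) * (s/r) ^ (CARD('d) + 1) * r powr (- Qexp TYPE('d) b)\<bar> \<le> 2^(n+1) * R"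
      if "1 \<le> \<bar>s/r\<bar>" "\<bar>s/r\<bar> \<le> 2" for s
      using coef_bound(2)[OF that(2) R0, of "n+1"] unfolding R_def Q_def n_def .
    have G01: "\<forall>s y w. norm (G0ker b \<psi> r s y w) \<le> C * r powr (1 - b - Q)"
    proof (intro allI)
      fix s y w
      have "norm (G0ker b \<psi> r s y w) \<le> 2^(n+1) * R * (real CARD('d) * (B1 * (2 * Kb b * r powr (1-b))))"
        by (rule G0_kernel(1)[OF r _ Kc1], rule cG0, assumption+)
      also have "\<dots> \<le> C * r powr (1 - b - Q)"
        unfolding e2[symmetric] by (rule mono_bound[where c=c4, OF _ Cge(4)]) (auto simp: c4_def K_def d_def algebra_simps R0)
      finally show "norm (G0ker b \<psi> r s y w) \<le> C * r powr (1 - b - Q)" .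
    qed
    have G02: "grad_y_bound (G0ker b \<psi> r) (C * r powr (1 - 2*b - Q))"
      apply (rule grad_mono[OF G0_kernel(2)[OF r _ Kc1]])
       apply (rule cG0, assumption+)
      unfolding e3[symmetric] by (rule mono_bound[where c=c5, OF _ Cge(5)]) (auto simp: c5_def K_def d_def algebra_simps R0)
    
    have cG1: "\<bar>- inverse (c0 TYPE('d)) * (s/r) ^ (n+1) * R\<bar> \<le> 2^(n+1) * R"
      if "1 \<le> \<bar>s/r\<bar>" "\<bar>s/r\<bar> \<le> 2" for s
      using coef_bound(3)[OF that(2) R0, of "n+1"] .
    have kG1: "G1ker b \<psi> r s y w = (if s = 0 then 0 else (- inverse (c0 TYPE('d)) * (s/r) ^ (n+1) * R) * \<psi> (s/r, Mop b r s (y,w)))" for s y w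
      unfolding G1ker_def R_def n_def Q_def ..
    have G11: "\<forall>s y w. \<bar>G1ker b \<psi> r s y w\<bar> \<le> C * r powr (- Q)"
    proof (intro allI)
      fix s y w
      have "\<bar>G1ker b \<psi> r s y w\<bar> \<le> 2^(n+1) * R * B0"
        by (rule scal_kernel(1)[OF r kG1 _ Kc1], rule cG1, assumption+)
      also have "\<dots> \<le> C * r powr (- Q)" by (rule mono_bound[where c=c6, OF _ Cge(6)]) (auto simp: c6_def R_def)
      finally show "\<bar>G1ker b \<psi> r s y w\<bar> \<le> C * r powr (- Q)" .
    qed
    have G12: "grad_y_bound (G1ker b \<psi> r) (C * r powr (- b - Q))"
      apply (rule grad_mono[OF scal_kernel(2)[OF r kG1 _ Kc1]])
       apply (rule cG1, assumption+)
      unfolding e1[symmetric] by (rule mono_bound[where c=c7, OF _ Cge(7)]) (auto simp: c7_def K_def algebra_simps R0)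
    
    have cGv: "\<bar>- inverse (c0 TYPE('d)) * (s/r) ^ CARD('d) * r powr (- Qexp TYPE('d) b)\<bar> \<le> 2^n * R"
      if "1 \<le> \<bar>s/r\<bar>" "\<bar>s/r\<bar> \<le> 2" for s
      using coef_bound(3)[OF that(2) R0, of n] unfolding R_def Q_def n_def .
    have V1: "\<forall>s y w. norm (Gvker b \<psi> r s y w) \<le> C * r powr (b - 2 - Q)"
    proof (intro allI)
      fix s y w
      have "norm (Gvker b \<psi> r s y w) \<le> 2^n * R * (B0 * (2 * Kb b * r powr (b-2)))"
        by (rule Gv_kernel(1)[OF r _ Kc0], rule cGv, assumption+)
      also have "\<dots> \<le> C * r powr (b - 2 - Q)"
        unfolding e4[symmetric] by (rule mono_bound[where c=c8, OF _ Cge(8)]) (auto simp: c8_def K_def algebra_simps R0)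
      finally show "norm (Gvker b \<psi> r s y w) \<le> C * r powr (b - 2 - Q)" .
    qed
    have V2: "grad_y_bound (Gvker b \<psi> r) (C * r powr (- 2 - Q))"
      apply (rule grad_mono[OF Gv_kernel(2)[OF r _ Kc0]])
       apply (rule cGv, assumption+)
      unfolding e5[symmetric] by (rule mono_bound[where c=c9, OF _ Cge(9)]) (auto simp: c9_def K_def algebra_simps R0)
    show ?thesis by (intro conjI Un_least S1 S2 S3 S4 K1 K2 G01 G02 G11 G12 V1 V2)
  qed
  have "\<forall>r>0. ksupp (Kker b \<psi> r) \<union> ksupp (G0ker b \<psi> r) \<union> ksupp (G1ker b \<psi> r) \<union> ksupp (Gvker b \<psi> r)
        \<subseteq> {(s, y, w). -2*r \<le> s \<and> s \<le> -r \<and> norm y \<le> C * r powr b \<and> norm w \<le> C * r powr (b - 1)}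
    \<and> (\<forall>s y w. \<bar>Kker b \<psi> r s y w\<bar> \<le> C * r powr (- Q))
    \<and> grad_y_bound (Kker b \<psi> r) (C * r powr (- b - Q))
    \<and> (\<forall>s y w. norm (G0ker b \<psi> r s y w) \<le> C * r powr (1 - b - Q))
    \<and> grad_y_bound (G0ker b \<psi> r) (C * r powr (1 - 2*b - Q))
    \<and> (\<forall>s y w. \<bar>G1ker b \<psi> r s y w\<bar> \<le> C * r powr (- Q))
    \<and> grad_y_bound (G1ker b \<psi> r) (C * r powr (- b - Q))
    \<and> (\<forall>s y w. norm (Gvker b \<psi> r s y w) \<le> C * r powr (b - 2 - Q))
    \<and> grad_y_bound (Gvker b \<psi> r) (C * r powr (- 2 - Q))"
    by (intro allI impI) (rule per_r)
  note main_fact = this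
  show ?thesis
    apply (rule exI[of _ C])
    apply (rule conjI[OF C0])
    using main_fact unfolding Q_def .
qed

end

theorem lemma2p5:
  fixes \<psi> :: "real \<times> ((real^'d) \<times> (real^'d)) \<Rightarrow> real" and \<beta> :: real
  assumes "\<beta> > 1"
    and "smooth_fun \<psi>"
    and "compact (closure {z. \<psi> z \<noteq> 0})"
    and "\<forall>z. \<psi> z \<ge> 0"
    and "(\<psi> has_integral 1) UNIV"
    and "closure {z. \<psi> z \<noteq> 0} \<subseteq> {-2<..<-1} \<times> (ball 0 1 \<times> ball 0 1)"
  shows "\<exists>C>0. \<forall>r>0.
      ksupp (Kker \<beta> \<psi> r) \<union> ksupp (G0ker \<beta> \<psi> r) \<union> ksupp (G1ker \<beta> \<psi> r) \<union> ksupp (Gvker \<beta> \<psi> r)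
        \<subseteq> {(s, y, w). -2*r \<le> s \<and> s \<le> -r \<and> norm y \<le> C * r powr \<beta> \<and> norm w \<le> C * r powr (\<beta> - 1)}
    \<and> (\<forall>s y w. \<bar>Kker \<beta> \<psi> r s y w\<bar> \<le> C * r powr (- Qexp TYPE('d) \<beta>))
    \<and> grad_y_bound (Kker \<beta> \<psi> r) (C * r powr (- \<beta> - Qexp TYPE('d) \<beta>))
    \<and> (\<forall>s y w. norm (G0ker \<beta> \<psi> r s y w) \<le> C * r powr (1 - \<beta> - Qexp TYPE('d) \<beta>))
    \<and> grad_y_bound (G0ker \<beta> \<psi> r) (C * r powr (1 - 2*\<beta> - Qexp TYPE('d) \<beta>))
    \<and> (\<forall>s y w. \<bar>G1ker \<beta> \<psi> r s y w\<bar> \<le> C * r powr (- Qexp TYPE('d) \<beta>))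
    \<and> grad_y_bound (G1ker \<beta> \<psi> r) (C * r powr (- \<beta> - Qexp TYPE('d) \<beta>))
    \<and> (\<forall>s y w. norm (Gvker \<beta> \<psi> r s y w) \<le> C * r powr (\<beta> - 2 - Qexp TYPE('d) \<beta>))
    \<and> grad_y_bound (Gvker \<beta> \<psi> r) (C * r powr (- 2 - Qexp TYPE('d) \<beta>))"
proof -
  note sm = assms(2) and cpt = assms(3)
  obtain B0 where B0: "B0 \<ge> 0" "\<And>x. \<bar>\<psi> x\<bar> \<le> B0"
    using smooth_bounded[OF sm cpt] by blast
  obtain B1 where B1: "B1 \<ge> 0" "\<And>x u. \<bar>frechet_derivative \<psi> (at x) u\<bar> \<le> B1 * norm u"
    using smooth_deriv_bound[OF sm cpt] by blast
  obtain B2 where B2: "B2 \<ge> 0" "\<And>x v h. ((\<lambda>x. frechet_derivative \<psi> (at x) v) has_derivative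
      frechet_derivative (\<lambda>x. frechet_derivative \<psi> (at x) v) (at x)) (at x) \<and>
     \<bar>frechet_derivative (\<lambda>x. frechet_derivative \<psi> (at x) v) (at x) h\<bar> \<le> B2 * norm v * norm h"
    using smooth_deriv2_bound[OF sm cpt] by blast
  have d1: "\<And>x. (\<psi> has_derivative frechet_derivative \<psi> (at x)) (at x)"
    by (rule frechet_derivative_works[THEN iffD1, OF smooth_diff[OF sm]])
  have z0: "\<And>x. x \<notin> closure {z. \<psi> z \<noteq> 0} \<Longrightarrow> \<psi> x = 0"
    by (rule iter_zero_outside[OF iter_dderiv.base])
  have z1: "\<And>x u. x \<notin> closure {z. \<psi> z \<noteq> 0} \<Longrightarrow> frechet_derivative \<psi> (at x) u = 0"
  proof -
    fix x u assume "x \<notin> closure {z. \<psi> z \<noteq> 0}"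
    from iter_zero_outside[OF iter_dderiv.step[OF iter_dderiv.base, of \<psi> u] this]
    show "frechet_derivative \<psi> (at x) u = 0" by simp
  qed
  have z2: "\<And>x v h. x \<notin> closure {z. \<psi> z \<noteq> 0} \<Longrightarrow> frechet_derivative (\<lambda>x. frechet_derivative \<psi> (at x) v) (at x) h = 0"
  proof -
    fix x v h assume "x \<notin> closure {z. \<psi> z \<noteq> 0}"
    from iter_zero_outside[OF iter_dderiv.step[OF iter_dderiv.step[OF iter_dderiv.base, of \<psi> v], of h] this]
    show "frechet_derivative (\<lambda>x. frechet_derivative \<psi> (at x) v) (at x) h = 0" by simp
  qed
  have KLi: "KL \<psi> \<beta> B0 B1 B2"
    apply unfold_locales
                apply (rule assms(1))
               apply (rule assms(6))
              apply (rule B0(1))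
             apply (rule B0(2))
            apply (rule B1(1))
           apply (rule B1(2))
          apply (rule d1)
         apply (rule B2(1))
        apply (rule B2(2)[THEN conjunct2])
       apply (rule B2(2)[THEN conjunct1])
      apply (erule z0)
     apply (erule z1)
    apply (erule z2)
    done
  show ?thesis by (rule KL.main[OF KLi])
qed


end
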